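(* Let $\mathcal{T}=(V,A,E,f,q,v_0)$ be a decorated rooted tree with $n=\delta_{v_0}>0$, and let $\mathcal{T}_i=(V_i,A_i,E_i,f_i,q_i)$, $1\le i\le n$, be the decorated trees attached to $\mathcal{T}$ as described in the context, with $A_{0,i}=\{\alpha\in A_i: f_i(\alpha)=0\}$. For each $x\in(V\setminus\{v_0\})\cup A_0$, $$N_x+N^{(i)}_x=\phi(v_0,x)\deg(\mathcal{T}),$$ where $i$ is the unique element of $\{1,\dots,n\}$ with $x\in V_i\cup(A_{0,i}\setminus\{\alpha_i\})$, $N_x$ is computed in $\mathcal{T}$ and $N^{(i)}_x$ in $\mathcal{T}_i$.
   Context: A graph is a pair $(X_0,X_1)$ of finite sets such that each element of $X_1$ (an edge) is a $2$-element subset of $X_0$; elements of $X_0$ are cells. The valency $\delta_x$ of a cell is the number of edges containing it. A path is a tuple $(x_0,\dots,x_n)$ ($n\ge0$) of cells with $\{x_i,x_{i+1}\}$ an edge for each $i<n$, these edges pairwise distinct; a cell/edge is in the path if it is some $x_i$ / some $\{x_i,x_{i+1}\}$. The graph is a tree if any two cells $x,y$ are joined by a unique path $\gamma_{x,y}$. A decorated tree is $(V,A,E,f,q)$ with $V$ (vertices), $A$ (arrows) finite disjoint sets, $(V\cup A,E)$ a tree, every arrow of valency $1$, $f:A\to\mathbb{Z}$, $q(e,x)\in\mathbb{Z}$ for each $e\in E$, $x\in e$, with $q(e,\alpha)=1$ for $\alpha\in A$, and for each $v\in V$ and distinct edges $e,e'\ni v$, $\gcd(q(e,v),q(e',v))=1$.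 $A_0=\{\alpha\in A:f(\alpha)=0\}$. For $x\in V\cup A$, $e\ni x$: $Q(e,x)=\prod q(e',x)$ over edges $e'\ne e$ containing $x$ (empty product $=1$); for an edge $e=\{x,y\}$, $\det(e)=q(e,x)q(e,y)-Q(e,x)Q(e,y)$. An edge $\varepsilon$ is incident to a path $\gamma$ if it is not in $\gamma$ but contains a cell $u$ of $\gamma$; $q(\varepsilon,\gamma):=q(\varepsilon,u)$. For $v\ne\alpha$, $v\in V\cup A$, $\alpha\in A$: $x_{v,\alpha}=f(\alpha)\prod_\varepsilon q(\varepsilon,\gamma_{v,\alpha})$ over edges incident to $\gamma_{v,\alpha}$. For $v\in V\cup A_0$, $N_v=\sum_{\alpha\in A\setminus A_0}x_{v,\alpha}$. For a path $\gamma=(x_0,\dots,x_m)$, $m\ge1$, $\phi(\gamma)$ is the product of $q(e,u)$ over all pairs with $u\in\{x_1,\dots,x_m\}$ and $e$ an edge containing $u$ not in $\gamma$; $\phi(x,y)=\phi(\gamma_{x,y})$ for $x\ne y$. A root of $(V,A,E,f,q)$ is a vertex $v_0$ with $q(e,v_0)=1$ for every edge $e\ni v_0$ such that for every $v\in V\setminus\{v_0\}$, all edges $e\ni v$ not in $\gamma_{v_0,v}$ satisfy $q(e,v)\ge1$ and at most one of them satisfies $q(e,v)\ne1$. A decorated rooted tree is $(V,A,E,f,q,v_0)$ with $v_0$ a root. $\deg(\mathcal{T})$ denotes $N_{v_0}$. Central elements: a path $(w_1,\dots,w_m)$, $m\ge2$, satisfies $(+)$ if every edge $e\ni w_m$ other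 than $\{w_{m-1},w_m\}$ has $q(e,w_m)\ge1$ and at most one such edge has $q(e,w_m)>1$; $\eta\in V\cup A$ is central if $\gamma_{\eta,v}$ satisfies $(+)$ for every $v\in V\setminus\{\eta\}$. For a decorated tree $\mathcal{S}=(V,A,E,f,q)$ and central $\eta$, $\mathcal{S}^{(\eta)}$ is the unique decorated tree $(V,A,E,f,q^* )$ (such a unique tree exists) with: $q^*(e,\eta)=q(e,\eta)$ for $e\ni\eta$; $q^*(e,v)=q(e,v)$ for $v\in V\setminus\{\eta\}$ and edges $e\ni v$ not in $\gamma_{\eta,v}$; $q^*(e,v)=Q(e,v)-q(e,v)$ for every edge $e=\{\eta,v\}$ with $v\in V$; $\det^*(e)=-\det(e)$ for every edge $e=\{u,v\}$ with $u,v\in V\setminus\{\eta\}$. The trees $\mathcal{T}_i$: let $v_1,\dots,v_n$ be the distinct cells adjacent to $v_0$, $e_i=\{v_0,v_i\}$. Delete $e_1,\dots,e_n$; let $\mathcal{C}_i$ be the component containing $v_i$. Let $\mathcal{T}'_i$ be obtained from $\mathcal{C}_i$ by adding an arrow $\alpha_i$ with $f(\alpha_i)=0$ and an edge $\{\alpha_i,v_i\}$ decorated $q(e_i,v_i)$ near $v_i$ and $1$ near $\alpha_i$. Then $\alpha_i$ is central in $\mathcal{T}'_i$ and $\mathcal{T}_i:=(\mathcal{T}'_i)^{(\alpha_i)}$. *)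

theory Defs
  imports Main
begin

definition graph :: "'a set \<Rightarrow> 'a set set \<Rightarrow> bool" where
  "graph X0 X1 \<longleftrightarrow> finite X0 \<and> finite X1 \<and> (\<forall>e\<in>X1. e \<subseteq> X0 \<and> card e = 2)"

definition valency :: "'a set set \<Rightarrow> 'a \<Rightarrow> nat" where
  "valency X1 x = card {e\<in>X1. x \<in> e}"

definition path_edges :: "'a list \<Rightarrow> 'a set set" where
  "path_edges p = {{p ! i, p ! Suc i} | i. i < length p - 1}"

definition is_path :: "'a set \<Rightarrow> 'a set set \<Rightarrow> 'a list \<Rightarrow> bool" where
  "is_path X0 X1 p \<longleftrightarrow> p \<noteq> [] \<and> set p \<subseteq> X0 \<and>
     (\<forall>i < length p - 1. {p ! i, p ! Suc i} \<in> X1) \<and>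
     distinct (map (\<lambda>i. {p ! i, p ! Suc i}) [0..<length p - 1])"

definition is_tree :: "'a set \<Rightarrow> 'a set set \<Rightarrow> bool" where
  "is_tree X0 X1 \<longleftrightarrow> graph X0 X1 \<and>
     (\<forall>x\<in>X0. \<forall>y\<in>X0. \<exists>!p. is_path X0 X1 p \<and> hd p = x \<and> last p = y)"

definition gpath :: "'a set \<Rightarrow> 'a set set \<Rightarrow> 'a \<Rightarrow> 'a \<Rightarrow> 'a list" where
  "gpath X0 X1 x y = (THE p. is_path X0 X1 p \<and> hd p = x \<and> last p = y)"

definition decorated_tree ::
  "'a set \<Rightarrow> 'a set \<Rightarrow> 'a set set \<Rightarrow> ('a \<Rightarrow> int) \<Rightarrow> ('a set \<Rightarrow> 'a \<Rightarrow> int) \<Rightarrow> bool" where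
  "decorated_tree V A E f q \<longleftrightarrow>
     finite V \<and> finite A \<and> V \<inter> A = {} \<and> is_tree (V \<union> A) E \<and>
     (\<forall>\<alpha>\<in>A. valency E \<alpha> = 1) \<and>
     (\<forall>e\<in>E. \<forall>\<alpha>\<in>A. \<alpha> \<in> e \<longrightarrow> q e \<alpha> = 1) \<and>
     (\<forall>v\<in>V. \<forall>e\<in>E. \<forall>e'\<in>E. v \<in> e \<longrightarrow> v \<in> e' \<longrightarrow> e \<noteq> e' \<longrightarrow> gcd (q e v) (q e' v) = 1)"

definition A0 :: "'a set \<Rightarrow> ('a \<Rightarrow> int) \<Rightarrow> 'a set" where
  "A0 A f = {\<alpha>\<in>A. f \<alpha> = 0}"

definition Qd :: "'a set set \<Rightarrow> ('a set \<Rightarrow> 'a \<Rightarrow> int) \<Rightarrow> 'a set \<Rightarrow> 'a \<Rightarrow> int" where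
  "Qd E q e x = (\<Prod>e'\<in>{e'\<in>E. x \<in> e' \<and> e' \<noteq> e}. q e' x)"

definition detd :: "'a set set \<Rightarrow> ('a set \<Rightarrow> 'a \<Rightarrow> int) \<Rightarrow> 'a \<Rightarrow> 'a \<Rightarrow> int" where
  "detd E q x y = q {x,y} x * q {x,y} y - Qd E q {x,y} x * Qd E q {x,y} y"

definition incident_edges :: "'a set set \<Rightarrow> 'a list \<Rightarrow> 'a set set" where
  "incident_edges E p = {\<epsilon>\<in>E. \<epsilon> \<notin> path_edges p \<and> (\<exists>u\<in>set p. u \<in> \<epsilon>)}"

definition q_path :: "('a set \<Rightarrow> 'a \<Rightarrow> int) \<Rightarrow> 'a set \<Rightarrow> 'a list \<Rightarrow> int" where
  "q_path q \<epsilon> p = q \<epsilon> (THE u. u \<in> set p \<and> u \<in> \<epsilon>)"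

definition xva ::
  "'a set \<Rightarrow> 'a set \<Rightarrow> 'a set set \<Rightarrow> ('a \<Rightarrow> int) \<Rightarrow> ('a set \<Rightarrow> 'a \<Rightarrow> int) \<Rightarrow> 'a \<Rightarrow> 'a \<Rightarrow> int" where
  "xva V A E f q v \<alpha> =
     (let \<gamma> = gpath (V \<union> A) E v \<alpha> in f \<alpha> * (\<Prod>\<epsilon>\<in>incident_edges E \<gamma>. q_path q \<epsilon> \<gamma>))"

definition Nd ::
  "'a set \<Rightarrow> 'a set \<Rightarrow> 'a set set \<Rightarrow> ('a \<Rightarrow> int) \<Rightarrow> ('a set \<Rightarrow> 'a \<Rightarrow> int) \<Rightarrow> 'a \<Rightarrow> int" where
  "Nd V A E f q v = (\<Sum>\<alpha>\<in>A - A0 A f. xva V A E f q v \<alpha>)"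

definition phi_path :: "'a set set \<Rightarrow> ('a set \<Rightarrow> 'a \<Rightarrow> int) \<Rightarrow> 'a list \<Rightarrow> int" where
  "phi_path E q p =
     (\<Prod>(u, e)\<in>{(u, e). u \<in> set (tl p) \<and> e \<in> E \<and> u \<in> e \<and> e \<notin> path_edges p}. q e u)"

definition phid ::
  "'a set \<Rightarrow> 'a set \<Rightarrow> 'a set set \<Rightarrow> ('a set \<Rightarrow> 'a \<Rightarrow> int) \<Rightarrow> 'a \<Rightarrow> 'a \<Rightarrow> int" where
  "phid V A E q x y = phi_path E q (gpath (V \<union> A) E x y)"

definition is_root ::
  "'a set \<Rightarrow> 'a set \<Rightarrow> 'a set set \<Rightarrow> ('a set \<Rightarrow> 'a \<Rightarrow> int) \<Rightarrow> 'a \<Rightarrow> bool" where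
  "is_root V A E q v0 \<longleftrightarrow> v0 \<in> V \<and> (\<forall>e\<in>E. v0 \<in> e \<longrightarrow> q e v0 = 1) \<and>
     (\<forall>v\<in>V - {v0}.
        (\<forall>e\<in>E. v \<in> e \<and> e \<notin> path_edges (gpath (V \<union> A) E v0 v) \<longrightarrow> q e v \<ge> 1) \<and>
        card {e\<in>E. v \<in> e \<and> e \<notin> path_edges (gpath (V \<union> A) E v0 v) \<and> q e v \<noteq> 1} \<le> 1)"

definition degT ::
  "'a set \<Rightarrow> 'a set \<Rightarrow> 'a set set \<Rightarrow> ('a \<Rightarrow> int) \<Rightarrow> ('a set \<Rightarrow> 'a \<Rightarrow> int) \<Rightarrow> 'a \<Rightarrow> int" where
  "degT V A E f q v0 = Nd V A E f q v0"

text \<open>qs is the decoration q* of S^(eta), where S = (V,A,E,f,q).\<close>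
definition is_eta_transform ::
  "'a set \<Rightarrow> 'a set \<Rightarrow> 'a set set \<Rightarrow> ('a \<Rightarrow> int) \<Rightarrow> ('a set \<Rightarrow> 'a \<Rightarrow> int) \<Rightarrow> 'a
   \<Rightarrow> ('a set \<Rightarrow> 'a \<Rightarrow> int) \<Rightarrow> bool" where
  "is_eta_transform V A E f q \<eta> qs \<longleftrightarrow>
     decorated_tree V A E f qs \<and>
     (\<forall>e\<in>E. \<eta> \<in> e \<longrightarrow> qs e \<eta> = q e \<eta>) \<and>
     (\<forall>v\<in>V - {\<eta>}. \<forall>e\<in>E. v \<in> e \<and> e \<notin> path_edges (gpath (V \<union> A) E \<eta> v) \<longrightarrow> qs e v = q e v) \<and>
     (\<forall>v\<in>V. {\<eta>, v} \<in> E \<longrightarrow> qs {\<eta>, v} v = Qd E q {\<eta>, v} v - q {\<eta>, v} v) \<and>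
     (\<forall>u\<in>V - {\<eta>}. \<forall>v\<in>V - {\<eta>}. {u, v} \<in> E \<longrightarrow> detd E qs u v = - detd E q u v)"

text \<open>For a neighbour u = v_i of v0: the component C_i containing u after deleting
  all edges at v0, extended by a fresh arrow \<alpha> = \<alpha>_i.\<close>
definition comp_cells :: "'a set set \<Rightarrow> 'a \<Rightarrow> 'a \<Rightarrow> 'a set" where
  "comp_cells E v0 u = {y. (u, y) \<in> {(a, b). {a, b} \<in> E \<and> v0 \<notin> {a, b}}\<^sup>*}"

definition att_V :: "'a set \<Rightarrow> 'a set set \<Rightarrow> 'a \<Rightarrow> 'a \<Rightarrow> 'a set" where
  "att_V V E v0 u = V \<inter> comp_cells E v0 u"

definition att_A :: "'a set \<Rightarrow> 'a set set \<Rightarrow> 'a \<Rightarrow> 'a \<Rightarrow> 'a \<Rightarrow> 'a set" where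
  "att_A A E v0 u \<alpha> = (A \<inter> comp_cells E v0 u) \<union> {\<alpha>}"

definition att_E :: "'a set set \<Rightarrow> 'a \<Rightarrow> 'a \<Rightarrow> 'a \<Rightarrow> 'a set set" where
  "att_E E v0 u \<alpha> = {e\<in>E. v0 \<notin> e \<and> e \<subseteq> comp_cells E v0 u} \<union> {{\<alpha>, u}}"

definition att_f :: "('a \<Rightarrow> int) \<Rightarrow> 'a \<Rightarrow> 'a \<Rightarrow> int" where
  "att_f f \<alpha> = f(\<alpha> := 0)"

definition att_q' :: "('a set \<Rightarrow> 'a \<Rightarrow> int) \<Rightarrow> 'a \<Rightarrow> 'a \<Rightarrow> 'a \<Rightarrow> 'a set \<Rightarrow> 'a \<Rightarrow> int" where
  "att_q' q v0 u \<alpha> = (\<lambda>e x. if e = {\<alpha>, u} then (if x = \<alpha> then 1 else q {v0, u} u) else q e x)"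

text \<open>qs is the decoration of T_i = (T'_i)^(\<alpha>_i).\<close>
definition att_q ::
  "'a set \<Rightarrow> 'a set \<Rightarrow> 'a set set \<Rightarrow> ('a \<Rightarrow> int) \<Rightarrow> ('a set \<Rightarrow> 'a \<Rightarrow> int) \<Rightarrow> 'a \<Rightarrow> 'a \<Rightarrow> 'a
   \<Rightarrow> ('a set \<Rightarrow> 'a \<Rightarrow> int) \<Rightarrow> bool" where
  "att_q V A E f q v0 u \<alpha> qs \<longleftrightarrow>
     is_eta_transform (att_V V E v0 u) (att_A A E v0 u \<alpha>) (att_E E v0 u \<alpha>) (att_f f \<alpha>)
       (att_q' q v0 u \<alpha>) \<alpha> qs"

end

theory Submission
  imports Defs
begin
fun ep :: "'a list \<Rightarrow> 'a set list" where
  "ep (x # y # p) = {x, y} # ep (y # p)"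
| "ep _ = []"

lemma ep_nth: "ep p = map (\<lambda>i. {p ! i, p ! Suc i}) [0..<length p - 1]"
proof (induction p rule: ep.induct)
  case (1 x y p)
  have "[0..<length (x # y # p) - 1] = 0 # map Suc [0..<length (y#p) - 1]"
    by (simp add: upt_conv_Cons map_Suc_upt del: upt_Suc)
  then show ?case using 1 by simp
qed auto

lemma path_edges_ep: "path_edges p = set (ep p)"
  unfolding path_edges_def ep_nth by auto

lemma is_path_ep: "is_path X0 E p \<longleftrightarrow> p \<noteq> [] \<and> set p \<subseteq> X0 \<and> set (ep p) \<subseteq> E \<and> distinct (ep p)"
  unfolding is_path_def ep_nth by auto

lemma length_ep: "length (ep p) = length p - 1"
  by (simp add: ep_nth)

lemma ep_Cons: "ep (x # p) = (if p = [] then [] else {x, hd p} # ep p)"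
  by (cases p) auto

lemma ep_append_tl: "p \<noteq> [] \<Longrightarrow> q \<noteq> [] \<Longrightarrow> last p = hd q \<Longrightarrow> ep (p @ tl q) = ep p @ ep q"
proof (induction p rule: ep.induct)
  case (1 x y p)
  then show ?case by simp
next
  case ("2_1")
  then show ?case by simp
next
  case ("2_2" x)
  then show ?case by (cases q) (auto simp: ep_Cons)
qed

lemma ep_snoc: "p \<noteq> [] \<Longrightarrow> ep (p @ [z]) = ep p @ [{last p, z}]"
  using ep_append_tl[of p "[last p, z]"] by simp

lemma ep_rev: "ep (rev p) = rev (ep p)"
proof (induction p rule: ep.induct)
  case (1 x y p)
  have "ep (rev (x # y # p)) = ep (rev (y # p) @ tl [y, x])" by simp
  also have "\<dots> = ep (rev (y # p)) @ ep [y, x]"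
    by (rule ep_append_tl) (auto simp: last_rev)
  finally show ?case using 1 by (auto simp: insert_commute)
qed auto

lemma ep_drop: "ep (drop n p) = drop n (ep p)"
proof (induction p arbitrary: n rule: ep.induct)
  case (1 x y p)
  then show ?case by (cases n) auto
next
  case ("2_1" n) then show ?case by simp
next
  case ("2_2" v n) then show ?case by (cases n) auto
qed

lemma ep_take: "ep (take (Suc n) p) = take n (ep p)"
proof (induction p arbitrary: n rule: ep.induct)
  case (1 x y p)
  then show ?case by (cases n) auto
qed auto

lemma set_ep_sub: "e \<in> set (ep p) \<Longrightarrow> e \<subseteq> set p"
  by (induction p rule: ep.induct) auto

lemma is_path_take: "is_path X0 E p \<Longrightarrow> 0 < n \<Longrightarrow> is_path X0 E (take n p)"
  unfolding is_path_ep
  by (cases n) (auto simp: ep_take dest: in_set_takeD)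

lemma is_path_drop: "is_path X0 E p \<Longrightarrow> n < length p \<Longrightarrow> is_path X0 E (drop n p)"
  unfolding is_path_ep
  by (auto simp: ep_drop dest: in_set_dropD)

lemma is_path_rev: "is_path X0 E p \<Longrightarrow> is_path X0 E (rev p)"
  unfolding is_path_ep by (auto simp: ep_rev)

lemma is_path_single: "x \<in> X0 \<Longrightarrow> is_path X0 E [x]"
  unfolding is_path_ep by auto

lemma is_path_append_tl:
  "is_path X0 E p \<Longrightarrow> is_path X0 E q \<Longrightarrow> last p = hd q \<Longrightarrow> set (ep p) \<inter> set (ep q) = {}
   \<Longrightarrow> is_path X0 E (p @ tl q)"
  unfolding is_path_ep
  by (auto simp: ep_append_tl dest: list.set_sel(2))

lemma is_path_snoc:
  "is_path X0 E p \<Longrightarrow> z \<in> X0 \<Longrightarrow> {last p, z} \<in> E \<Longrightarrow> {last p, z} \<notin> set (ep p)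
   \<Longrightarrow> is_path X0 E (p @ [z])"
  unfolding is_path_ep by (auto simp: ep_snoc)

lemma is_path_Cons:
  "is_path X0 E p \<Longrightarrow> z \<in> X0 \<Longrightarrow> {z, hd p} \<in> E \<Longrightarrow> {z, hd p} \<notin> set (ep p)
   \<Longrightarrow> is_path X0 E (z # p)"
  unfolding is_path_ep by (auto simp: ep_Cons)

section \<open>Trees\<close>

lemma tree_graph: "is_tree X0 E \<Longrightarrow> graph X0 E"
  by (simp add: is_tree_def)

lemma tree_edge_card: "is_tree X0 E \<Longrightarrow> e \<in> E \<Longrightarrow> card e = 2 \<and> e \<subseteq> X0"
  by (auto simp: is_tree_def graph_def)

lemma tree_edge_neq: "is_tree X0 E \<Longrightarrow> {a, b} \<in> E \<Longrightarrow> a \<noteq> b"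
  using tree_edge_card by fastforce

lemma gpath_path:
  assumes "is_tree X0 E" "x \<in> X0" "y \<in> X0"
  shows "is_path X0 E (gpath X0 E x y) \<and> hd (gpath X0 E x y) = x \<and> last (gpath X0 E x y) = y"
proof -
  from assms have "\<exists>!p. is_path X0 E p \<and> hd p = x \<and> last p = y" unfolding is_tree_def by blast
  then show ?thesis unfolding gpath_def by (rule theI')
qed

lemma gpath_eq:
  assumes "is_tree X0 E" "is_path X0 E p" "hd p = x" "last p = y"
  shows "gpath X0 E x y = p"
proof -
  have "x \<in> X0" "y \<in> X0" using assms(2-4) unfolding is_path_ep by (auto dest: hd_in_set last_in_set)
  then have u: "\<exists>!p. is_path X0 E p \<and> hd p = x \<and> last p = y" using assms(1) unfolding is_tree_def by blast
  show ?thesis unfolding gpath_def by (rule the1_equality[OF u]) (use assms(2-4) in simp)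
qed

lemma path_unique:
  assumes "is_tree X0 E" "is_path X0 E p" "is_path X0 E p'" "hd p = hd p'" "last p = last p'"
  shows "p = p'"
proof -
  have 1: "gpath X0 E (hd p) (last p) = p" by (rule gpath_eq[OF assms(1,2)]) auto
  have 2: "gpath X0 E (hd p') (last p') = p'" by (rule gpath_eq[OF assms(1,3)]) auto
  have "gpath X0 E (hd p) (last p) = gpath X0 E (hd p') (last p')" using assms(4,5) by simp
  then show ?thesis using 1 2 by simp
qed

lemma is_path_sub:
  assumes "is_path X0 E p" "i \<le> j" "j < length p"
  shows "is_path X0 E (drop i (take (Suc j) p))"
    and "hd (drop i (take (Suc j) p)) = p ! i" and "last (drop i (take (Suc j) p)) = p ! j"
    and "length (drop i (take (Suc j) p)) = Suc j - i"
proof -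
  show "is_path X0 E (drop i (take (Suc j) p))"
    using assms by (intro is_path_drop is_path_take) auto
  show "hd (drop i (take (Suc j) p)) = p ! i" using assms by (simp add: hd_drop_conv_nth)
  show "last (drop i (take (Suc j) p)) = p ! j" using assms
    by (simp add: last_conv_nth)
  show "length (drop i (take (Suc j) p)) = Suc j - i" using assms by simp
qed

lemma tree_path_distinct:
  assumes tr: "is_tree X0 E" and p: "is_path X0 E p"
  shows "distinct p"
proof (rule ccontr)
  assume "\<not> distinct p"
  then obtain i j where ij: "i < j" "j < length p" "p ! i = p ! j"
    by (metis distinct_conv_nth linorder_neqE_nat)
  let ?s = "drop i (take (Suc j) p)"
  have s: "is_path X0 E ?s" "hd ?s = p ! i" "last ?s = p ! i" "length ?s = Suc j - i"
    using is_path_sub[OF p, of i j] ij by auto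
  have "p ! i \<in> X0" using p ij unfolding is_path_ep by (auto dest: nth_mem)
  then have "is_path X0 E [p ! i]" by (rule is_path_single)
  then have "?s = [p ! i]" using path_unique[OF tr s(1), of "[p!i]"] s by auto
  then have "length ?s = 1" by simp
  then show False using s(4) ij by simp
qed

lemma tree_chord:
  assumes tr: "is_tree X0 E" and p: "is_path X0 E p" and e: "{a, b} \<in> E"
    and a: "a \<in> set p" and b: "b \<in> set p"
  shows "{a, b} \<in> set (ep p)"
proof -
  have ab: "a \<noteq> b" using tree_edge_neq[OF tr e] .
  have main: "{a', b'} \<in> set (ep p)" if "{a', b'} \<in> E" "i < j" "j < length p" "p ! i = a'" "p ! j = b'" for a' b' i j
  proof -
    let ?s = "drop i (take (Suc j) p)"
    have s: "is_path X0 E ?s" "hd ?s = a'" "last ?s = b'" "length ?s = Suc j - i"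
      using is_path_sub[OF p, of i j] that by auto
    have "a' \<in> X0" "b' \<in> X0" using p that unfolding is_path_ep by (auto dest: nth_mem)
    moreover have "a' \<noteq> b'" using tree_edge_neq[OF tr that(1)] .
    ultimately have "is_path X0 E [a', b']" using that(1) unfolding is_path_ep by auto
    then have "?s = [a', b']" using path_unique[OF tr s(1), of "[a', b']"] s by auto
    then have "length ?s = 2" by simp
    then have "j = Suc i" using s(4) that(2) by simp
    then show ?thesis using that unfolding ep_nth by (auto intro!: image_eqI[where x=i])
  qed
  obtain i j where ij: "i < length p" "j < length p" "p ! i = a" "p ! j = b"
    using a b by (auto simp: in_set_conv_nth)
  have "i \<noteq> j" using ij ab by auto
  show ?thesis
  proof (cases "i < j")
    case True
    then show ?thesis using main[of a b i j] e ij by blast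
  next
    case False
    then have "j < i" using \<open>i \<noteq> j\<close> by simp
    then show ?thesis using main[of b a j i] e ij by (simp add: insert_commute)
  qed
qed

definition loc :: "'a set set \<Rightarrow> ('a set \<Rightarrow> 'a \<Rightarrow> int) \<Rightarrow> 'a \<Rightarrow> 'a set set \<Rightarrow> int" where
  "loc E q y X = (\<Prod>\<epsilon>\<in>{\<epsilon>\<in>E. y \<in> \<epsilon> \<and> \<epsilon> \<notin> X}. q \<epsilon> y)"

lemma loc_cong:
  assumes "\<And>\<epsilon>. \<epsilon> \<in> E \<Longrightarrow> y \<in> \<epsilon> \<Longrightarrow> (\<epsilon> \<in> X \<longleftrightarrow> \<epsilon> \<in> Y)"
  shows "loc E q y X = loc E q y Y"
proof -
  have "{\<epsilon>\<in>E. y \<in> \<epsilon> \<and> \<epsilon> \<notin> X} = {\<epsilon>\<in>E. y \<in> \<epsilon> \<and> \<epsilon> \<notin> Y}" using assms by blast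
  then show ?thesis unfolding loc_def by simp
qed

lemma loc_un:
  assumes "finite E"
  shows "loc E q y (X \<union> Y) * loc E q y (X \<inter> Y) = loc E q y X * loc E q y Y"
proof -
  have 1: "{\<epsilon>\<in>E. y \<in> \<epsilon> \<and> \<epsilon> \<notin> X \<union> Y} = {\<epsilon>\<in>E. y \<in> \<epsilon> \<and> \<epsilon> \<notin> X} \<inter> {\<epsilon>\<in>E. y \<in> \<epsilon> \<and> \<epsilon> \<notin> Y}" by blast
  have 2: "{\<epsilon>\<in>E. y \<in> \<epsilon> \<and> \<epsilon> \<notin> X \<inter> Y} = {\<epsilon>\<in>E. y \<in> \<epsilon> \<and> \<epsilon> \<notin> X} \<union> {\<epsilon>\<in>E. y \<in> \<epsilon> \<and> \<epsilon> \<notin> Y}" by blast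
  show ?thesis unfolding loc_def 1 2
    by (subst mult.commute) (rule prod.union_inter, use assms in auto)
qed

lemma loc_insert:
  assumes "finite E" "e \<in> E" "y \<in> e" "e \<notin> X"
  shows "loc E q y X = q e y * loc E q y (insert e X)"
proof -
  have "{\<epsilon>\<in>E. y \<in> \<epsilon> \<and> \<epsilon> \<notin> X} = insert e {\<epsilon>\<in>E. y \<in> \<epsilon> \<and> \<epsilon> \<notin> insert e X}" using assms by blast
  then show ?thesis unfolding loc_def using assms(1) by simp
qed

lemma loc_one:
  assumes "\<And>\<epsilon>. \<epsilon> \<in> E \<Longrightarrow> y \<in> \<epsilon> \<Longrightarrow> q \<epsilon> y = 1"
  shows "loc E q y X = 1"
  unfolding loc_def using assms by (intro prod.neutral) auto

lemma card2_eq: "card e = 2 \<Longrightarrow> a \<in> e \<Longrightarrow> b \<in> e \<Longrightarrow> a \<noteq> b \<Longrightarrow> e = {a, b}"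
  by (auto simp: card_2_iff)

lemma tree_finite_E: "is_tree X0 E \<Longrightarrow> finite E"
  by (simp add: is_tree_def graph_def)

lemma incident_prod:
  assumes tr: "is_tree X0 E" and p: "is_path X0 E p"
  shows "(\<Prod>\<epsilon>\<in>incident_edges E p. q_path q \<epsilon> p) = (\<Prod>y\<in>set p. loc E q y (set (ep p)))"
proof -
  define I where "I y = {\<epsilon>\<in>E. y \<in> \<epsilon> \<and> \<epsilon> \<notin> set (ep p)}" for y
  have fin: "finite E" using tree_finite_E[OF tr] .
  have key: "y1 = y2" if "y1 \<in> set p" "y2 \<in> set p" "\<epsilon> \<in> I y1" "\<epsilon> \<in> I y2" for y1 y2 \<epsilon>
  proof (rule ccontr)
    assume ne: "y1 \<noteq> y2"
    have "\<epsilon> \<in> E" "y1 \<in> \<epsilon>" "y2 \<in> \<epsilon>" "\<epsilon> \<notin> set (ep p)" using that unfolding I_def by auto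
    moreover have "card \<epsilon> = 2" using tree_edge_card[OF tr \<open>\<epsilon> \<in> E\<close>] by simp
    ultimately have "\<epsilon> = {y1, y2}" using ne card2_eq by metis
    then have "\<epsilon> \<in> set (ep p)" using tree_chord[OF tr p, of y1 y2] that \<open>\<epsilon> \<in> E\<close> by simp
    then show False using \<open>\<epsilon> \<notin> set (ep p)\<close> by simp
  qed
  have inc: "incident_edges E p = (\<Union>y\<in>set p. I y)"
    unfolding incident_edges_def I_def path_edges_ep by blast
  have "(\<Prod>\<epsilon>\<in>incident_edges E p. q_path q \<epsilon> p) = (\<Prod>y\<in>set p. \<Prod>\<epsilon>\<in>I y. q_path q \<epsilon> p)"
    unfolding inc by (rule prod.UNION_disjoint) (use fin key in \<open>auto simp: I_def\<close>)
  also have "\<dots> = (\<Prod>y\<in>set p. \<Prod>\<epsilon>\<in>I y. q \<epsilon> y)"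
  proof (rule prod.cong[OF refl], rule prod.cong[OF refl])
    fix y \<epsilon> assume y: "y \<in> set p" and e: "\<epsilon> \<in> I y"
    have "(THE u. u \<in> set p \<and> u \<in> \<epsilon>) = y"
    proof (rule the_equality)
      show "y \<in> set p \<and> y \<in> \<epsilon>" using y e by (auto simp: I_def)
    next
      fix u assume "u \<in> set p \<and> u \<in> \<epsilon>"
      moreover have "\<epsilon> \<in> I u" using calculation e by (auto simp: I_def)
      ultimately show "u = y" using key[OF _ y _ e] by auto
    qed
    then show "q_path q \<epsilon> p = q \<epsilon> y" by (simp add: q_path_def)
  qed
  finally show ?thesis by (simp add: loc_def I_def)
qed

lemma phi_prod:
  assumes fin: "finite E"
  shows "phi_path E q p = (\<Prod>y\<in>set (tl p). loc E q y (set (ep p)))"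
proof -
  have "{(u, e). u \<in> set (tl p) \<and> e \<in> E \<and> u \<in> e \<and> e \<notin> path_edges p}
      = (SIGMA u:set (tl p). {e\<in>E. u \<in> e \<and> e \<notin> set (ep p)})"
    by (auto simp: path_edges_ep)
  then have "phi_path E q p = (\<Prod>(u, e)\<in>(SIGMA u:set (tl p). {e\<in>E. u \<in> e \<and> e \<notin> set (ep p)}). q e u)"
    unfolding phi_path_def by simp
  also have "\<dots> = (\<Prod>u\<in>set (tl p). \<Prod>e\<in>{e\<in>E. u \<in> e \<and> e \<notin> set (ep p)}. q e u)"
    by (rule prod.Sigma[symmetric]) (use fin in auto)
  finally show ?thesis by (simp add: loc_def)
qed

lemma gpath_rev:
  assumes tr: "is_tree X0 E" and "x \<in> X0" "y \<in> X0"
  shows "gpath X0 E y x = rev (gpath X0 E x y)"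
proof -
  have g: "is_path X0 E (gpath X0 E x y)" "hd (gpath X0 E x y) = x" "last (gpath X0 E x y) = y"
    using gpath_path[OF assms] by auto
  have ne: "gpath X0 E x y \<noteq> []" using g(1) by (simp add: is_path_def)
  show ?thesis
    by (rule gpath_eq[OF tr is_path_rev[OF g(1)]]) (use g ne in \<open>auto simp: hd_rev last_rev\<close>)
qed

lemma last_edge:
  "distinct p \<Longrightarrow> \<epsilon> \<in> set (ep p) \<Longrightarrow> last p \<in> \<epsilon> \<Longrightarrow> \<epsilon> = {last (butlast p), last p}"
proof (induction p rule: ep.induct)
  case (1 x y r)
  show ?case
  proof (cases "\<epsilon> = {x, y}")
    case True
    have "x \<noteq> last (y # r)" using 1(2) by (metis distinct.simps(2) last_in_set list.distinct(1))
    then have ly: "last (y # r) = y" using 1(4) True by auto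
    have "r = []"
    proof (rule ccontr)
      assume "r \<noteq> []"
      then have "last r \<in> set r" by simp
      then show False using ly \<open>r \<noteq> []\<close> 1(2) by auto
    qed
    then show ?thesis using True by simp
  next
    case False
    then have e: "\<epsilon> \<in> set (ep (y # r))" using 1(3) by simp
    then have "r \<noteq> []" by (cases r) auto
    have "\<epsilon> = {last (butlast (y # r)), last (y # r)}" using 1 e by simp
    then show ?thesis using \<open>r \<noteq> []\<close> by (cases r) auto
  qed
qed auto

lemma ep_nth_i: "Suc i < length p \<Longrightarrow> ep p ! i = {p ! i, p ! Suc i}"
  unfolding ep_nth by (subst nth_map) (auto simp: nth_upt)

lemma last_take_Suc: "k < length p \<Longrightarrow> last (take (Suc k) p) = p ! k"
  by (simp add: take_Suc_conv_app_nth)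

lemma ep_mem_drop:
  assumes "Suc i < length p" "k \<le> i"
  shows "{p ! i, p ! Suc i} \<in> set (ep (drop k p))"
proof -
  have "drop k (ep p) ! (i - k) = ep p ! i" using assms by (simp add: length_ep)
  moreover have "ep p ! i = {p ! i, p ! Suc i}" using assms by (simp add: ep_nth_i)
  moreover have "i - k < length (drop k (ep p))" using assms by (simp add: length_ep)
  ultimately show ?thesis unfolding ep_drop by (metis nth_mem)
qed

lemma ep_split:
  assumes "k < length p"
  shows "set (ep p) = set (ep (take (Suc k) p)) \<union> set (ep (drop k p))"
proof -
  have dk: "drop k p = p ! k # drop (Suc k) p" using assms by (simp add: Cons_nth_drop_Suc)
  have "p = take (Suc k) p @ tl (drop k p)" using dk by simp
  moreover have "ep (take (Suc k) p @ tl (drop k p)) = ep (take (Suc k) p) @ ep (drop k p)"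
    by (rule ep_append_tl) (use assms dk in \<open>auto simp: last_take_Suc\<close>)
  ultimately show ?thesis by (metis set_append)
qed

lemma interior_valency:
  assumes p: "is_path X0 E p" and fin: "finite E" and i: "0 < i" "Suc i < length p"
  shows "2 \<le> valency E (p ! i)"
proof -
  let ?e1 = "{p ! (i - 1), p ! i}" and ?e2 = "{p ! i, p ! Suc i}"
  have l: "length (ep p) = length p - 1" by (simp add: length_ep)
  have e1: "ep p ! (i - 1) = ?e1" using i ep_nth_i[of "i - 1" p] by simp
  have e2: "ep p ! i = ?e2" using i by (simp add: ep_nth_i)
  have d: "distinct (ep p)" "set (ep p) \<subseteq> E" using p by (auto simp: is_path_ep)
  have "?e1 \<noteq> ?e2"
  proof
    assume "?e1 = ?e2"
    then have "ep p ! (i - 1) = ep p ! i" using e1 e2 by simp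
    then show False using d(1) i l by (simp add: nth_eq_iff_index_eq)
  qed
  moreover have "i - 1 < length (ep p)" "i < length (ep p)" using l i by simp_all
  then have "?e1 \<in> set (ep p)" "?e2 \<in> set (ep p)" using e1 e2 nth_mem by metis+
  then have "?e1 \<in> E" "?e2 \<in> E" using d(2) by auto
  ultimately have "{?e1, ?e2} \<subseteq> {e\<in>E. p ! i \<in> e}" by auto
  then have "card {?e1, ?e2} \<le> valency E (p ! i)" unfolding valency_def
    by (rule card_mono[rotated]) (use fin in auto)
  then show ?thesis using \<open>?e1 \<noteq> ?e2\<close> by simp
qed

lemma prefix_gpath:
  assumes tr: "is_tree X0 E" and p: "is_path X0 E p" and j: "j < length p"
  shows "gpath X0 E (hd p) (p ! j) = take (Suc j) p"
  by (rule gpath_eq[OF tr is_path_take[OF p]]) (use p j in \<open>auto simp: last_take_Suc is_path_def\<close>)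

lemma hd_neq_last_length:
  "p \<noteq> [] \<Longrightarrow> hd p \<noteq> last p \<Longrightarrow> 2 \<le> length p"
  by (cases p) (auto simp: Suc_le_eq split: if_splits)

locale L =
  fixes V A :: "'a set" and E :: "'a set set" and f :: "'a \<Rightarrow> int"
    and q qs :: "'a set \<Rightarrow> 'a \<Rightarrow> int" and v0 u \<alpha> :: 'a
  assumes T: "decorated_tree V A E f q"
    and root: "is_root V A E q v0"
    and nbr: "{v0, u} \<in> E"
    and fresh: "\<alpha> \<notin> V \<union> A"
    and Ti: "att_q V A E f q v0 u \<alpha> qs"
begin

abbreviation "G \<equiv> V \<union> A"
abbreviation "C \<equiv> comp_cells E v0 u"
abbreviation "E' \<equiv> att_E E v0 u \<alpha>"
abbreviation "V' \<equiv> att_V V E v0 u"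
abbreviation "A' \<equiv> att_A A E v0 u \<alpha>"
abbreviation "f' \<equiv> att_f f \<alpha>"
abbreviation "q' \<equiv> att_q' q v0 u \<alpha>"
abbreviation "P z \<equiv> gpath G E v0 z"
abbreviation "R \<equiv> {(a, b). {a, b} \<in> E \<and> v0 \<notin> {a, b}}"

lemma tr: "is_tree G E" using T by (simp add: decorated_tree_def)
lemma finE: "finite E" using tree_finite_E[OF tr] .
lemma VA: "V \<inter> A = {}" using T by (simp add: decorated_tree_def)
lemma v0V: "v0 \<in> V" using root by (simp add: is_root_def)
lemma q_v0: "\<epsilon> \<in> E \<Longrightarrow> v0 \<in> \<epsilon> \<Longrightarrow> q \<epsilon> v0 = 1" using root by (simp add: is_root_def)
lemma edge_sub: "\<epsilon> \<in> E \<Longrightarrow> \<epsilon> \<subseteq> G" using tree_edge_card[OF tr] by blast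
lemma uG: "u \<in> G" using edge_sub[OF nbr] by simp
lemma u_ne: "u \<noteq> v0" using tree_edge_neq[OF tr nbr] by simp
lemma arrow_val: "\<beta> \<in> A \<Longrightarrow> valency E \<beta> = 1" using T by (simp add: decorated_tree_def)
lemma q_arrow: "\<epsilon> \<in> E \<Longrightarrow> \<beta> \<in> A \<Longrightarrow> \<beta> \<in> \<epsilon> \<Longrightarrow> q \<epsilon> \<beta> = 1" using T by (simp add: decorated_tree_def)

lemma C_def': "C = {y. (u, y) \<in> R\<^sup>*}" by (simp add: comp_cells_def)

lemma gP: "x \<in> G \<Longrightarrow> y \<in> G \<Longrightarrow> is_path G E (gpath G E x y) \<and> hd (gpath G E x y) = x \<and> last (gpath G E x y) = y"
  using gpath_path[OF tr] by blast

lemma gP_ne: "x \<in> G \<Longrightarrow> y \<in> G \<Longrightarrow> gpath G E x y \<noteq> []"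
  using gP by (auto simp: is_path_def)

lemma gP_dist: "x \<in> G \<Longrightarrow> y \<in> G \<Longrightarrow> distinct (gpath G E x y)"
  using gP tree_path_distinct[OF tr] by blast

lemma C_props0: "(u, y) \<in> R\<^sup>* \<Longrightarrow> y \<in> G \<and> y \<noteq> v0"
proof (induction rule: rtrancl_induct)
  case base
  then show ?case using uG u_ne by simp
next
  case (step y z)
  then show ?case using edge_sub[of "{y, z}"] by auto
qed

lemma C_props: "y \<in> C \<Longrightarrow> y \<in> G \<and> y \<noteq> v0"
  using C_props0 C_def' by blast

lemma u_C: "u \<in> C" unfolding C_def' by simp

lemma avoid_C0: "(u, y) \<in> R\<^sup>* \<Longrightarrow> v0 \<notin> set (gpath G E u y)"
proof (induction rule: rtrancl_induct)
  case base
  have "gpath G E u u = [u]"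
    by (rule gpath_eq[OF tr is_path_single[OF uG]]) auto
  then show ?case using u_ne by simp
next
  case (step y z)
  have yC: "y \<in> C" using step(1) C_def' by simp
  then have yG: "y \<in> G" using C_props by blast
  have zG: "z \<in> G" using step(2) edge_sub[of "{y, z}"] by auto
  let ?g = "gpath G E u y"
  have g: "is_path G E ?g" "hd ?g = u" "last ?g = y" using gP[OF uG yG] by auto
  show ?case
  proof (cases "z \<in> set ?g")
    case True
    then obtain j where j: "j < length ?g" "?g ! j = z" by (auto simp: in_set_conv_nth)
    have "gpath G E u z = take (Suc j) ?g" using prefix_gpath[OF tr g(1) j(1)] g(2) j(2) by simp
    then show ?thesis using step(3) by (auto dest: in_set_takeD)
  next
    case False
    have "{last ?g, z} \<notin> set (ep ?g)" using False set_ep_sub by blast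
    then have "is_path G E (?g @ [z])" using is_path_snoc[OF g(1) zG] step(2) g(3) by auto
    moreover have "hd (?g @ [z]) = u" using g(1,2) by (cases ?g) (auto simp: is_path_def)
    ultimately have "gpath G E u z = ?g @ [z]"
      using gpath_eq[OF tr, of "?g @ [z]" u z] by simp
    then show ?thesis using step(2,3) by auto
  qed
qed

lemma avoid_C: "y \<in> C \<Longrightarrow> v0 \<notin> set (gpath G E u y)"
  using avoid_C0 C_def' by blast

lemma P_C: "y \<in> C \<Longrightarrow> P y = v0 # gpath G E u y"
proof -
  assume yC: "y \<in> C"
  then have yG: "y \<in> G" using C_props by blast
  let ?g = "gpath G E u y"
  have g: "is_path G E ?g" "hd ?g = u" "last ?g = y" "?g \<noteq> []" using gP[OF uG yG] gP_ne[OF uG yG] by auto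
  have "{v0, hd ?g} \<notin> set (ep ?g)" using avoid_C[OF yC] set_ep_sub by blast
  then have "is_path G E (v0 # ?g)" using is_path_Cons[OF g(1)] v0V nbr g(2) by auto
  moreover have "hd (v0 # ?g) = v0" "last (v0 # ?g) = y" using g by auto
  ultimately show ?thesis using gpath_eq[OF tr, of "v0 # ?g" v0 y] by simp
qed

lemma path_in_C:
  assumes p: "is_path G E p" and h: "hd p \<in> C" and nv: "v0 \<notin> set p"
  shows "set p \<subseteq> C"
proof -
  have "\<forall>i < length p. p ! i \<in> C"
  proof (intro allI impI)
    fix i assume "i < length p"
    then show "p ! i \<in> C"
    proof (induction i)
      case 0
      then show ?case using h by (simp add: hd_conv_nth)
    next
      case (Suc i)
      have e: "{p ! i, p ! Suc i} \<in> E"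
        using p Suc(2) ep_nth_i[of i p] nth_mem[of i "ep p"] by (auto simp: is_path_ep length_ep)
      have "v0 \<notin> {p ! i, p ! Suc i}" using nv Suc(2) by auto
      then have "(p ! i, p ! Suc i) \<in> R" using e by simp
      moreover have "(u, p ! i) \<in> R\<^sup>*" using Suc C_def' by simp
      ultimately show ?case using C_def' by (simp add: rtrancl_into_rtrancl)
    qed
  qed
  then show ?thesis by (auto simp: in_set_conv_nth)
qed

lemma P_facts: "z \<in> G \<Longrightarrow> is_path G E (P z) \<and> hd (P z) = v0 \<and> last (P z) = z \<and> distinct (P z) \<and> P z \<noteq> []"
  using gP[OF _ ] gP_dist gP_ne v0V by blast

lemma C_char:
  assumes zG: "z \<in> G" and nz: "z \<noteq> v0" and u1: "P z ! 1 = u"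
  shows "z \<in> C"
proof -
  have pz: "is_path G E (P z)" "hd (P z) = v0" "last (P z) = z" "distinct (P z)" "P z \<noteq> []"
    using P_facts[OF zG] by auto
  have len: "2 \<le> length (P z)" using hd_neq_last_length[OF pz(5)] pz nz by simp
  have t: "is_path G E (tl (P z))" using is_path_drop[OF pz(1), of 1] len by (simp add: drop_Suc)
  have "hd (tl (P z)) = u"
  proof (cases "P z")
    case (Cons a r)
    then have "r \<noteq> []" using len by auto
    then show ?thesis using Cons u1 by (simp add: hd_conv_nth)
  qed (use pz in simp)
  moreover have "v0 \<notin> set (tl (P z))" using pz(4) pz(2) pz(5) by (cases "P z") auto
  ultimately have "set (tl (P z)) \<subseteq> C" using path_in_C[OF t] u_C by simp
  moreover have "z \<in> set (tl (P z))"
  proof (cases "P z")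
    case (Cons a r)
    then have "r \<noteq> []" using len by auto
    then show ?thesis using Cons pz(3) by (metis last_ConsR last_in_set list.sel(3))
  qed (use pz in simp)
  ultimately show ?thesis by blast
qed

lemma tlP_C: "y \<in> C \<Longrightarrow> set (tl (P y)) \<subseteq> C"
proof -
  assume yC: "y \<in> C"
  then have yG: "y \<in> G" using C_props by blast
  have "is_path G E (gpath G E u y)" "hd (gpath G E u y) = u" using gP[OF uG yG] by auto
  then show ?thesis using P_C[OF yC] path_in_C avoid_C[OF yC] u_C by simp
qed

lemma edges_at_C:
  assumes yC: "y \<in> C" and e: "\<epsilon> \<in> E" "y \<in> \<epsilon>"
  shows "(\<epsilon> = {v0, u} \<and> y = u) \<or> (v0 \<notin> \<epsilon> \<and> \<epsilon> \<subseteq> C)"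
proof -
  have yG: "y \<in> G" and yv: "y \<noteq> v0" using C_props[OF yC] by auto
  have c2: "card \<epsilon> = 2" using tree_edge_card[OF tr e(1)] by simp
  then obtain z where z: "z \<in> \<epsilon>" "z \<noteq> y" using e(2) by (metis card_2_iff insert_iff)
  have eps: "\<epsilon> = {y, z}" using card2_eq[OF c2 e(2) z(1)] z(2) by simp
  show ?thesis
  proof (cases "z = v0")
    case True
    have "is_path G E [v0, y]" unfolding is_path_ep using v0V yG e eps True by (auto simp: insert_commute)
    then have "P y = [v0, y]" using gpath_eq[OF tr, of "[v0, y]" v0 y] by simp
    then have "gpath G E u y = [y]" using P_C[OF yC] by simp
    then have "y = u" using gP[OF uG yG] by (metis list.sel(1))
    then show ?thesis using eps True by (auto simp: insert_commute)
  next
    case False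
    then have "(y, z) \<in> R" using e eps yv by auto
    then have "z \<in> C" using yC C_def' by (simp add: rtrancl_into_rtrancl)
    then show ?thesis using eps yC False yv by auto
  qed
qed

end

lemma Qd_loc: "Qd E r e x = loc E r x {e}"
  unfolding Qd_def loc_def by (rule prod.cong) auto

context L begin

abbreviation "P' z \<equiv> gpath (V' \<union> A') E' \<alpha> z"

definition pe :: "'a \<Rightarrow> 'a set" where "pe y = {last (butlast (P y)), y}"
definition pe' :: "'a \<Rightarrow> 'a set" where "pe' y = (if y = u then {\<alpha>, u} else pe y)"

lemma Eatt: "E' = {e\<in>E. v0 \<notin> e \<and> e \<subseteq> C} \<union> {{\<alpha>, u}}" by (simp add: att_E_def)
lemma C_G: "C \<subseteq> G" using C_props by blast
lemma Gatt: "V' \<union> A' = C \<union> {\<alpha>}" using C_G by (auto simp: att_V_def att_A_def)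
lemma alpha_C: "\<alpha> \<notin> C" using C_G fresh by blast
lemma v0_C: "v0 \<notin> C" using C_props by blast
lemma eta: "is_eta_transform V' A' E' f' q' \<alpha> qs" using Ti by (simp add: att_q_def)
lemma dt': "decorated_tree V' A' E' f' qs" using eta by (simp add: is_eta_transform_def)
lemma tr': "is_tree (V' \<union> A') E'" using dt' by (simp add: decorated_tree_def)
lemma finE': "finite E'" using tree_finite_E[OF tr'] .

lemma path_T':
  assumes p: "is_path G E p" and s: "set p \<subseteq> C"
  shows "is_path (V' \<union> A') E' p"
proof -
  have "set (ep p) \<subseteq> E'"
  proof
    fix \<epsilon> assume e: "\<epsilon> \<in> set (ep p)"
    then have "\<epsilon> \<in> E" using p by (auto simp: is_path_ep)
    moreover have "\<epsilon> \<subseteq> C" using set_ep_sub[OF e] s by blast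
    ultimately show "\<epsilon> \<in> E'" using v0_C unfolding Eatt by blast
  qed
  then show ?thesis using p s Gatt unfolding is_path_ep by auto
qed

lemma gpath_u_C: "y \<in> C \<Longrightarrow> is_path G E (gpath G E u y) \<and> hd (gpath G E u y) = u \<and> last (gpath G E u y) = y \<and> set (gpath G E u y) \<subseteq> C \<and> gpath G E u y \<noteq> []"
proof -
  assume yC: "y \<in> C"
  have yG: "y \<in> G" using C_props[OF yC] by blast
  have "set (gpath G E u y) \<subseteq> C" using tlP_C[OF yC] P_C[OF yC] by simp
  then show ?thesis using gP[OF uG yG] gP_ne[OF uG yG] by blast
qed

lemma gpath_uu: "gpath G E u u = [u]"
  by (rule gpath_eq[OF tr is_path_single[OF uG]]) auto

lemma P_u: "P u = [v0, u]" using P_C[OF u_C] gpath_uu by simp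

lemma P'_C: "y \<in> C \<Longrightarrow> P' y = \<alpha> # gpath G E u y"
proof -
  assume yC: "y \<in> C"
  let ?g = "gpath G E u y"
  have g: "is_path G E ?g" "hd ?g = u" "last ?g = y" "set ?g \<subseteq> C" "?g \<noteq> []" using gpath_u_C[OF yC] by auto
  have g': "is_path (V' \<union> A') E' ?g" using path_T'[OF g(1) g(4)] .
  have "{\<alpha>, hd ?g} \<notin> set (ep ?g)" using set_ep_sub g(4) alpha_C by blast
  moreover have "{\<alpha>, hd ?g} \<in> E'" using g(2) Eatt by simp
  ultimately have "is_path (V' \<union> A') E' (\<alpha> # ?g)" using is_path_Cons[OF g'] Gatt by auto
  moreover have "hd (\<alpha> # ?g) = \<alpha>" "last (\<alpha> # ?g) = y" using g by auto
  ultimately show ?thesis using gpath_eq[OF tr', of "\<alpha> # ?g" \<alpha> y] by simp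
qed

lemma len_g: "y \<in> C \<Longrightarrow> y \<noteq> u \<Longrightarrow> 2 \<le> length (gpath G E u y)"
  using gpath_u_C hd_neq_last_length by metis

lemma pe_u: "pe u = {v0, u}" using P_u by (simp add: pe_def)

lemma pe_in:
  assumes yC: "y \<in> C"
  shows "pe y \<in> set (ep (P y)) \<and> pe y \<in> E \<and> y \<in> pe y"
proof -
  have yG: "y \<in> G" using C_props[OF yC] by blast
  have pf: "is_path G E (P y)" "last (P y) = y" using P_facts[OF yG] by auto
  have ne: "butlast (P y) \<noteq> []" using P_C[OF yC] gpath_u_C[OF yC] by (cases "gpath G E u y") auto
  have "P y = butlast (P y) @ [y]" using pf P_facts[OF yG] by (metis append_butlast_last_id)
  then have "ep (P y) = ep (butlast (P y)) @ [{last (butlast (P y)), y}]"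
    using ep_snoc[OF ne, of y] by simp
  then have "pe y \<in> set (ep (P y))" by (simp add: pe_def)
  then show ?thesis using pf by (auto simp: pe_def is_path_ep)
qed

lemma pe_notu: "y \<in> C \<Longrightarrow> y \<noteq> u \<Longrightarrow> v0 \<notin> pe y \<and> pe y \<subseteq> C"
  using edges_at_C pe_in by blast

lemma pe'_in: "y \<in> C \<Longrightarrow> pe' y \<in> E' \<and> y \<in> pe' y"
  using pe_in pe_notu unfolding pe'_def Eatt by auto

lemma PE'_at:
  assumes yC: "y \<in> C" and e: "\<epsilon> \<in> set (ep (P' y))" "y \<in> \<epsilon>"
  shows "\<epsilon> = pe' y"
proof -
  let ?g = "gpath G E u y"
  have g: "is_path G E ?g" "hd ?g = u" "last ?g = y" "set ?g \<subseteq> C" "?g \<noteq> []" using gpath_u_C[OF yC] by auto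
  have "is_path (V' \<union> A') E' (P' y)" using gpath_path[OF tr', of \<alpha> y] Gatt yC by auto
  then have d: "distinct (P' y)" using tree_path_distinct[OF tr'] by blast
  have "last (P' y) = y" using P'_C[OF yC] g by simp
  then have eq: "\<epsilon> = {last (butlast (P' y)), y}" using last_edge[OF d e(1)] e(2) by simp
  show ?thesis
  proof (cases "y = u")
    case True
    then show ?thesis using eq P'_C[OF yC] gpath_uu by (simp add: pe'_def)
  next
    case False
    have l: "2 \<le> length ?g" using len_g[OF yC False] .
    then have bn: "butlast ?g \<noteq> []" by (cases ?g) auto
    have "last (butlast (P' y)) = last (butlast ?g)" using P'_C[OF yC] bn g(5) by simp
    moreover have "last (butlast (P y)) = last (butlast ?g)" using P_C[OF yC] bn g(5) by simp
    ultimately show ?thesis using eq False by (simp add: pe'_def pe_def)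
  qed
qed

lemma q'_eq: "\<epsilon> \<noteq> {\<alpha>, u} \<Longrightarrow> q' \<epsilon> y = q \<epsilon> y" by (simp add: att_q'_def)
lemma q'_u: "q' {\<alpha>, u} u = q {v0, u} u"
proof -
  have "u \<noteq> \<alpha>" using fresh uG by blast
  then show ?thesis by (simp add: att_q'_def)
qed

lemma qs_eq:
  assumes yC: "y \<in> C" and e: "\<epsilon> \<in> E'" "y \<in> \<epsilon>" "\<epsilon> \<noteq> pe' y"
  shows "qs \<epsilon> y = q \<epsilon> y"
proof -
  have ya: "y \<noteq> \<alpha>" using yC alpha_C by blast
  have na: "\<epsilon> \<noteq> {\<alpha>, u}"
  proof
    assume "\<epsilon> = {\<alpha>, u}"
    then have "y = u" using e(2) ya by auto
    then show False using e(3) \<open>\<epsilon> = {\<alpha>, u}\<close> by (simp add: pe'_def)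
  qed
  have yG: "y \<in> G" using C_props[OF yC] by blast
  show ?thesis
  proof (cases "y \<in> V")
    case True
    then have "y \<in> V' - {\<alpha>}" using yC ya by (simp add: att_V_def)
    moreover have "\<epsilon> \<notin> path_edges (P' y)" using PE'_at[OF yC _ e(2)] e(3) by (auto simp: path_edges_ep)
    ultimately have "qs \<epsilon> y = q' \<epsilon> y" using eta e(1,2) unfolding is_eta_transform_def by blast
    then show ?thesis using q'_eq[OF na] by simp
  next
    case False
    then have yA: "y \<in> A" using yG by blast
    then have "y \<in> A'" using yC by (simp add: att_A_def)
    then have "qs \<epsilon> y = 1" using dt' e unfolding decorated_tree_def by blast
    moreover have "\<epsilon> \<in> E" using e(1) na Eatt by auto
    ultimately show ?thesis using q_arrow[OF _ yA e(2)] by simp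
  qed
qed

lemma loc'_gen:
  assumes yC: "y \<in> C" and X: "\<forall>\<epsilon>\<in>X. v0 \<notin> \<epsilon> \<and> \<alpha> \<notin> \<epsilon>"
    and r: "\<And>\<epsilon>. \<epsilon> \<in> E' \<Longrightarrow> y \<in> \<epsilon> \<Longrightarrow> \<epsilon> \<noteq> pe' y \<Longrightarrow> r \<epsilon> y = q \<epsilon> y"
  shows "loc E' r y (insert (pe' y) X) = loc E q y (insert (pe y) X)"
proof -
  have ya: "y \<noteq> \<alpha>" using yC alpha_C by blast
  have S: "{\<epsilon>\<in>E'. y \<in> \<epsilon> \<and> \<epsilon> \<notin> insert (pe' y) X} = {\<epsilon>\<in>E. y \<in> \<epsilon> \<and> \<epsilon> \<notin> insert (pe y) X}"
  proof (cases "y = u")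
    case True
    have "pe' y = {\<alpha>, u}" "pe y = {v0, u}" using True pe_u by (auto simp: pe'_def)
    then show ?thesis using True edges_at_C[OF yC] alpha_C v0_C unfolding Eatt by auto
  next
    case False
    then have "pe' y = pe y" by (simp add: pe'_def)
    moreover have "y \<notin> {\<alpha>, u}" using False ya by simp
    ultimately show ?thesis using False edges_at_C[OF yC] unfolding Eatt by auto
  qed
  show ?thesis unfolding loc_def S[symmetric]
    by (rule prod.cong[OF refl]) (use r in auto)
qed

lemma qs_loc:
  "y \<in> C \<Longrightarrow> \<forall>\<epsilon>\<in>X. v0 \<notin> \<epsilon> \<and> \<alpha> \<notin> \<epsilon> \<Longrightarrow> loc E' qs y (insert (pe' y) X) = loc E q y (insert (pe y) X)"
  using loc'_gen qs_eq by blast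

lemma q'_loc:
  assumes "y \<in> C" "\<forall>\<epsilon>\<in>X. v0 \<notin> \<epsilon> \<and> \<alpha> \<notin> \<epsilon>"
  shows "loc E' q' y (insert (pe' y) X) = loc E q y (insert (pe y) X)"
proof (rule loc'_gen[OF assms])
  fix \<epsilon> assume e: "\<epsilon> \<in> E'" "y \<in> \<epsilon>" "\<epsilon> \<noteq> pe' y"
  have "\<epsilon> \<noteq> {\<alpha>, u}"
  proof
    assume "\<epsilon> = {\<alpha>, u}"
    then have "y = u" using e(2) assms(1) alpha_C by auto
    then show False using e(3) \<open>\<epsilon> = {\<alpha>, u}\<close> by (simp add: pe'_def)
  qed
  then show "q' \<epsilon> y = q \<epsilon> y" by (rule q'_eq)
qed

end

context L begin

definition Phi :: "'a \<Rightarrow> int" where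
  "Phi y = (\<Prod>z\<in>set (tl (butlast (P y))). loc E q z (set (ep (P y))))"

lemma parent_facts:
  assumes yC: "y \<in> C" and yu: "y \<noteq> u"
  defines "v \<equiv> last (butlast (P y))"
  shows "v \<in> C" "P v = butlast (P y)" "length (P v) < length (P y)" "v \<in> V"
    "pe y = {v, y}" "P y = P v @ [y]" "y \<notin> set (P v)" "2 \<le> length (P v)"
proof -
  let ?g = "gpath G E u y" and ?W = "P y"
  have yG: "y \<in> G" using C_props[OF yC] by blast
  have g: "is_path G E ?g" "hd ?g = u" "last ?g = y" "set ?g \<subseteq> C" "?g \<noteq> []" using gpath_u_C[OF yC] by auto
  have W: "?W = v0 # ?g" using P_C[OF yC] .
  have lg: "2 \<le> length ?g" using len_g[OF yC yu] .
  have bn: "butlast ?g \<noteq> []" using lg by (cases ?g) auto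
  have Wf: "is_path G E ?W" "hd ?W = v0" "last ?W = y" "distinct ?W" "?W \<noteq> []" using P_facts[OF yG] by auto
  have vg: "v = last (butlast ?g)" using W bn g(5) by (simp add: v_def)
  have "v \<in> set ?g" using vg bn by (metis in_set_butlastD last_in_set)
  then show vC: "v \<in> C" using g(4) by blast
  have BW: "butlast ?W = v0 # butlast ?g" using W g(5) by simp
  have Wsplit: "?W = butlast ?W @ [y]" using Wf by (metis append_butlast_last_id)
  have lW: "1 < length ?W" using W lg g(5) by (simp del: gpath_def)
  have "is_path G E (butlast ?W)" using is_path_take[OF Wf(1), of "length ?W - 1"] lW
    by (simp add: butlast_conv_take)
  moreover have "hd (butlast ?W) = v0" "last (butlast ?W) = v" using BW by (auto simp: v_def)
  ultimately show Pv: "P v = butlast ?W" using gpath_eq[OF tr, of "butlast ?W" v0 v] by simp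
  show "length (P v) < length ?W" using Pv Wf by simp
  show "pe y = {v, y}" by (simp add: pe_def v_def)
  show "P y = P v @ [y]" using Wsplit Pv by simp
  show "y \<notin> set (P v)" using Wf(4) Wsplit Pv by (metis distinct_append not_distinct_conv_prefix)
  show "2 \<le> length (P v)" using Pv BW lg by simp
  have n: "3 \<le> length ?W" using W lg by simp
  have bW: "butlast ?W \<noteq> []" using BW by simp
  have "v = butlast ?W ! (length (butlast ?W) - 1)" using bW by (simp add: v_def last_conv_nth)
  also have "\<dots> = ?W ! (length ?W - 2)" using n by (simp add: nth_butlast numeral_2_eq_2)
  finally have "v = ?W ! (length ?W - 2)" .
  then have "2 \<le> valency E v"
    using interior_valency[OF Wf(1) finE, of "length ?W - 2"] n by simp
  moreover have "v \<in> G" using vC C_G by blast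
  ultimately show "v \<in> V" using arrow_val by fastforce
qed

lemma S_lemma:
  "y \<in> C \<Longrightarrow> y \<in> V \<Longrightarrow> q (pe y) y + qs (pe' y) y = (Phi y)^2 * loc E q y {pe y}"
proof (induction "length (P y)" arbitrary: y rule: less_induct)
  case less
  have yC: "y \<in> C" and yV: "y \<in> V" by fact+
  show ?case
  proof (cases "y = u")
    case True
    have uV': "u \<in> V'" using yV yC True by (simp add: att_V_def)
    have ae: "{\<alpha>, u} \<in> E'" by (simp add: Eatt)
    have c3: "qs {\<alpha>, u} u = Qd E' q' {\<alpha>, u} u - q' {\<alpha>, u} u"
      using eta uV' ae unfolding is_eta_transform_def by blast
    have "Qd E' q' {\<alpha>, u} u = loc E' q' u (insert (pe' u) {})" by (simp add: Qd_loc pe'_def)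
    also have "\<dots> = loc E q u (insert (pe u) {})" using q'_loc[OF u_C] by simp
    finally have Q: "Qd E' q' {\<alpha>, u} u = loc E q u {pe u}" by simp
    have "Phi u = 1" by (simp add: Phi_def P_u)
    then show ?thesis using True c3 Q q'_u pe_u by (simp add: pe'_def)
  next
    case False
    define v where "v = last (butlast (P y))"
    note pf = parent_facts[OF yC False, folded v_def]
    have vC: "v \<in> C" and vV: "v \<in> V" using pf by auto
    have IH: "q (pe v) v + qs (pe' v) v = (Phi v)^2 * loc E q v {pe v}"
      using less(1)[OF pf(3) vC vV] .
    define e where "e = pe y"
    have e_eq: "e = {v, y}" using pf(5) e_def by simp
    have eE: "e \<in> E" using pe_in[OF yC] e_def by simp
    have ey: "v0 \<notin> e \<and> e \<subseteq> C" using pe_notu[OF yC False] e_def by simp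
    have eE': "e \<in> E'" using eE ey Eatt by simp
    have ea: "\<alpha> \<notin> e" using ey alpha_C by blast
    have pe'y: "pe' y = e" using False e_def by (simp add: pe'_def)
    have pev: "pe v \<in> set (ep (P v))" "pe v \<in> E" "v \<in> pe v" using pe_in[OF vC] by auto
    have ynot: "y \<notin> set (P v)" using pf by simp
    have e_ne_pev: "e \<noteq> pe v" using set_ep_sub[OF pev(1)] ynot e_eq by blast
    have e_ne_pe'v: "e \<noteq> pe' v" using e_ne_pev ea by (auto simp: pe'_def)
    have e_notP: "e \<notin> set (ep (P v))" using set_ep_sub ynot e_eq by blast
    have vG: "v \<in> G" using vC C_G by blast
    have vv0: "v \<noteq> v0" using vC v0_C by blast
    have "q e v \<ge> 1" using root vV vv0 eE e_eq e_notP unfolding is_root_def path_edges_ep by blast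
    then have c0: "q e v \<noteq> 0" by simp
    have yV': "y \<in> V' - {\<alpha>}" "v \<in> V' - {\<alpha>}" using yV yC vV vC alpha_C by (auto simp: att_V_def)
    have "{v, y} \<in> E'" using eE' e_eq by simp
    then have det: "detd E' qs v y = - detd E' q' v y"
      using eta yV' unfolding is_eta_transform_def by blast
    have qsv: "qs e v = q e v" using qs_eq[OF vC eE'] e_ne_pe'v e_eq by simp
    have q'v: "q' e v = q e v" "q' e y = q e y" using ea by (auto simp: att_q'_def)
    have Qy: "Qd E' qs e y = loc E q y {e}" "Qd E' q' e y = loc E q y {e}"
      using qs_loc[OF yC, of "{}"] q'_loc[OF yC, of "{}"] pe'y e_def by (simp_all add: Qd_loc)
    have X: "\<forall>\<epsilon>\<in>{e}. v0 \<notin> \<epsilon> \<and> \<alpha> \<notin> \<epsilon>" using ey ea by simp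
    have pe'vE: "pe' v \<in> E'" "v \<in> pe' v" using pe'_in[OF vC] by auto
    have ins: "pe' v \<notin> {e}" using e_ne_pe'v by auto
    have "Qd E' qs e v = qs (pe' v) v * loc E' qs v (insert (pe' v) {e})"
      unfolding Qd_loc by (rule loc_insert[OF finE' pe'vE ins])
    then have Qsv: "Qd E' qs e v = qs (pe' v) v * loc E q v (insert (pe v) {e})"
      using qs_loc[OF vC X] by simp
    have "Qd E' q' e v = q' (pe' v) v * loc E' q' v (insert (pe' v) {e})"
      unfolding Qd_loc by (rule loc_insert[OF finE' pe'vE ins])
    then have Qq'v0: "Qd E' q' e v = q' (pe' v) v * loc E q v (insert (pe v) {e})"
      using q'_loc[OF vC X] by simp
    have "q' (pe' v) v = q (pe v) v"
    proof (cases "v = u")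
      case True then show ?thesis using q'_u pe_u by (simp add: pe'_def)
    next
      case False
      then have "\<alpha> \<notin> pe v" using pe_notu[OF vC False] alpha_C by blast
      then have "pe v \<noteq> {\<alpha>, u}" by auto
      then show ?thesis using False q'_eq by (simp add: pe'_def)
    qed
    then have Qq'v: "Qd E' q' e v = q (pe v) v * loc E q v (insert (pe v) {e})" using Qq'v0 by simp
    define Rv where "Rv = loc E q v (insert (pe v) {e})"
    define r where "r = loc E q y {e}"
    have detd_eq: "q e v * qs e y - qs (pe' v) v * Rv * r = - (q e v * q e y - q (pe v) v * Rv * r)"
      using det unfolding detd_def e_eq[symmetric] qsv q'v Qy Qsv Qq'v Rv_def r_def by (simp add: algebra_simps)
    have locv: "loc E q v {pe v} = q e v * Rv"
      unfolding Rv_def using loc_insert[OF finE eE _ , of v "{pe v}" q] e_eq e_ne_pev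
      by (simp add: insert_commute)
    have Pvf: "is_path G E (P v)" "distinct (P v)" "last (P v) = v" "P v \<noteq> []" using P_facts[OF vG] by auto
    have bPv: "butlast (P v) \<noteq> []" using pf(8) by (cases "P v") auto
    have tlB: "tl (butlast (P y)) = tl (P v)" using pf(2) by simp
    have Pv_split: "P v = butlast (P v) @ [v]" using Pvf by (metis append_butlast_last_id)
    have tlPv: "tl (P v) = tl (butlast (P v)) @ [v]" using Pv_split bPv by (metis tl_append2)
    define S0 where "S0 = set (tl (butlast (P v)))"
    have vS0: "v \<notin> S0"
    proof
      assume "v \<in> S0"
      then have "v \<in> set (butlast (P v))" unfolding S0_def by (meson list.set_sel(2) bPv)
      then show False using Pvf(2) Pv_split by (metis distinct_append not_distinct_conv_prefix)
    qed
    have setT: "set (tl (butlast (P y))) = insert v S0" using tlB tlPv S0_def by simp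
    have epW: "set (ep (P y)) = set (ep (P v)) \<union> {e}"
      using pf(6) ep_snoc[OF Pvf(4), of y] Pvf(3) e_eq by simp
    have l1: "loc E q z (set (ep (P y))) = loc E q z (set (ep (P v)))" if "z \<in> S0" for z
    proof -
      have "z \<in> set (butlast (P v))" using that unfolding S0_def by (meson list.set_sel(2) bPv)
      then have "z \<noteq> v" "z \<noteq> y" using Pvf(2) Pv_split ynot
        by (metis distinct_append not_distinct_conv_prefix, metis in_set_butlastD)
      then have "z \<notin> e" using e_eq by auto
      then show ?thesis unfolding epW by (intro loc_cong) auto
    qed
    have l2: "loc E q v (set (ep (P y))) = Rv"
      unfolding Rv_def epW
    proof (rule loc_cong)
      fix \<epsilon> assume "\<epsilon> \<in> E" "v \<in> \<epsilon>"
      show "(\<epsilon> \<in> set (ep (P v)) \<union> {e}) = (\<epsilon> \<in> insert (pe v) {e})"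
        using last_edge[OF Pvf(2), of \<epsilon>] Pvf(3) \<open>v \<in> \<epsilon>\<close> pev(1) by (auto simp: pe_def)
    qed
    have "Phi y = loc E q v (set (ep (P y))) * (\<Prod>z\<in>S0. loc E q z (set (ep (P y))))"
      unfolding Phi_def setT using vS0 by (simp add: prod.insert S0_def)
    also have "\<dots> = Rv * Phi v" using l1 l2 by (simp add: Phi_def S0_def)
    finally have Phiy: "Phi y = Rv * Phi v" .
    have "q e v * (q e y + qs e y) = Rv * r * (q (pe v) v + qs (pe' v) v)"
      using detd_eq by (simp add: algebra_simps)
    also have "\<dots> = Rv * r * ((Phi v)^2 * (q e v * Rv))" using IH locv by simp
    also have "\<dots> = q e v * ((Phi v * Rv)^2 * r)" by (simp add: algebra_simps power2_eq_square)
    finally have "q e v * (q e y + qs e y) = q e v * ((Phi v * Rv)^2 * r)" .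
    then have "q e y + qs e y = (Phi v * Rv)^2 * r" using c0 by simp
    then show ?thesis using Phiy pe'y e_def r_def by (simp add: algebra_simps)
  qed
qed

end

definition sp :: "'a set set \<Rightarrow> ('a set \<Rightarrow> 'a \<Rightarrow> int) \<Rightarrow> 'a list \<Rightarrow> int" where
  "sp E q p = (\<Prod>y\<in>set p. loc E q y (set (ep p)))"

lemma prod_split3:
  assumes "distinct (a @ m # b)"
  shows "(\<Prod>y\<in>set (a @ m # b). g y) = (\<Prod>y\<in>set a. g y) * g m * (\<Prod>y\<in>set b. g y)"
proof -
  have "set (a @ m # b) = set a \<union> insert m (set b)" by simp
  moreover have "set a \<inter> insert m (set b) = {}" "m \<notin> set b" using assms by auto
  ultimately show ?thesis by (simp add: prod.union_disjoint prod.insert mult_ac)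
qed

lemma in_set_drop_nth:
  assumes "y \<in> set (drop n p)"
  obtains i where "n \<le> i" "i < length p" "p ! i = y"
proof -
  obtain t where t: "t < length (drop n p)" "drop n p ! t = y" using assms by (auto simp: in_set_conv_nth)
  then show ?thesis using that[of "n + t"] by auto
qed

context L begin

lemma meet:
  assumes a: "a \<in> G" and b: "b \<in> G" and i: "i < length (P a)" and j: "j < length (P b)"
    and eq: "P a ! i = P b ! j"
  shows "i = j \<and> take (Suc i) (P a) = take (Suc i) (P b)"
proof -
  have pa: "is_path G E (P a)" "hd (P a) = v0" using P_facts[OF a] by auto
  have pb: "is_path G E (P b)" "hd (P b) = v0" using P_facts[OF b] by auto
  have 1: "P (P a ! i) = take (Suc i) (P a)" using prefix_gpath[OF tr pa(1) i] pa(2) by simp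
  have 2: "P (P b ! j) = take (Suc j) (P b)" using prefix_gpath[OF tr pb(1) j] pb(2) by simp
  have "take (Suc i) (P a) = take (Suc j) (P b)" using 1 2 eq by simp
  moreover have "length (take (Suc i) (P a)) = Suc i" "length (take (Suc j) (P b)) = Suc j" using i j by auto
  ultimately show ?thesis by auto
qed

lemma drop_C: "a \<in> C \<Longrightarrow> 1 \<le> k \<Longrightarrow> set (drop k (P a)) \<subseteq> C"
  using tlP_C[of a] set_drop_subset_set_drop[of 1 k "P a"] by (simp add: drop_Suc)

lemma side:
  assumes aC: "a \<in> C" and k: "1 \<le> k" and y: "y \<in> set (drop (Suc k) (P a))"
    and D: "\<forall>\<epsilon>\<in>D. y \<notin> \<epsilon> \<and> v0 \<notin> \<epsilon> \<and> \<alpha> \<notin> \<epsilon>"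
  shows "loc E q y (set (ep (drop k (P a))) \<union> D) = loc E q y (set (ep (P a)))"
    and "loc E' qs y (set (ep (drop k (P a))) \<union> D) = loc E q y (set (ep (drop k (P a))) \<union> D)"
proof -
  let ?p = "P a"
  have aG: "a \<in> G" using aC C_G by blast
  have pf: "is_path G E ?p" "hd ?p = v0" "distinct ?p" "?p \<noteq> []" using P_facts[OF aG] by auto
  obtain i where i: "Suc k \<le> i" "i < length ?p" "?p ! i = y" using y by (rule in_set_drop_nth)
  have kl: "k < length ?p" using i by simp
  have yC: "y \<in> C" using drop_C[OF aC, of "Suc k"] y k by auto
  show "loc E q y (set (ep (drop k ?p)) \<union> D) = loc E q y (set (ep ?p))"
  proof (rule loc_cong)
    fix \<epsilon> assume e: "\<epsilon> \<in> E" "y \<in> \<epsilon>"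
    have "\<epsilon> \<notin> set (ep (take (Suc k) ?p))"
    proof
      assume "\<epsilon> \<in> set (ep (take (Suc k) ?p))"
      then have "y \<in> set (take (Suc k) ?p)" using set_ep_sub e(2) by blast
      then show False using y pf(3) set_take_disj_set_drop_if_distinct[OF pf(3), of "Suc k" "Suc k"] by auto
    qed
    then show "(\<epsilon> \<in> set (ep (drop k ?p)) \<union> D) = (\<epsilon> \<in> set (ep ?p))"
      using ep_split[OF kl] D e(2) by auto
  qed
  have Py: "P y = take (Suc i) ?p" using prefix_gpath[OF tr pf(1) i(2)] pf(2) i(3) by simp
  have bt: "butlast (take (Suc i) ?p) = take i ?p" using i(2) by (simp add: butlast_take)
  have "last (take i ?p) = ?p ! (i - 1)" using last_take_Suc[of "i - 1" ?p] i by simp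
  then have pey: "pe y = {?p ! (i - 1), ?p ! Suc (i - 1)}" using Py bt i by (simp add: pe_def)
  have pey_in: "pe y \<in> set (ep (drop k ?p))" unfolding pey by (rule ep_mem_drop) (use i in auto)
  have "?p ! 1 = u" using P_C[OF aC] gpath_u_C[OF aC] by (cases "gpath G E u a") auto
  moreover have "1 < length ?p" using i k by simp
  then have "?p ! 1 \<noteq> ?p ! i" using nth_eq_iff_index_eq[OF pf(3), of 1 i] i(1,2) k by simp
  ultimately have yu: "y \<noteq> u" using i by simp
  then have "pe' y = pe y" by (simp add: pe'_def)
  have X: "\<forall>\<epsilon>\<in>set (ep (drop k ?p)) \<union> D. v0 \<notin> \<epsilon> \<and> \<alpha> \<notin> \<epsilon>"
    using set_ep_sub drop_C[OF aC k] D v0_C alpha_C by blast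
  show "loc E' qs y (set (ep (drop k ?p)) \<union> D) = loc E q y (set (ep (drop k ?p)) \<union> D)"
    using qs_loc[OF yC X] \<open>pe' y = pe y\<close> pey_in by (simp add: insert_absorb)
qed

lemma B1:
  assumes xC: "x \<in> C" and bG: "\<beta> \<in> G" and bC: "\<beta> \<notin> C" and bv: "\<beta> \<noteq> v0"
  shows "sp E q (gpath G E x \<beta>) = phid V A E q v0 x * sp E q (P \<beta>)"
proof -
  have xG: "x \<in> G" using xC C_G by blast
  let ?Px = "P x" and ?Pb = "P \<beta>"
  have px: "is_path G E ?Px" "hd ?Px = v0" "last ?Px = x" "distinct ?Px" "?Px \<noteq> []" using P_facts[OF xG] by auto
  have pb: "is_path G E ?Pb" "hd ?Pb = v0" "last ?Pb = \<beta>" "distinct ?Pb" "?Pb \<noteq> []" using P_facts[OF bG] by auto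
  have sPx: "set ?Px = insert v0 (set (tl ?Px))" using px(2,5) by (cases ?Px) auto
  have sPb: "set ?Pb = insert v0 (set (tl ?Pb))" using pb(2,5) by (cases ?Pb) auto
  have tlx: "set (tl ?Px) \<subseteq> C" using tlP_C[OF xC] .
  have disj: "set (tl ?Px) \<inter> set ?Pb = {}"
  proof (rule ccontr)
    assume "set (tl ?Px) \<inter> set ?Pb \<noteq> {}"
    then obtain z where z: "z \<in> set (tl ?Px)" "z \<in> set ?Pb" by blast
    have zC: "z \<in> C" using z tlx by blast
    obtain j where j: "j < length ?Pb" "?Pb ! j = z" using z(2) by (auto simp: in_set_conv_nth)
    have Pz: "P z = take (Suc j) ?Pb" using prefix_gpath[OF tr pb(1) j(1)] pb(2) j(2) by simp
    have "j \<noteq> 0"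
    proof
      assume "j = 0"
      then have "z = v0" using j pb(2) pb(5) by (simp add: hd_conv_nth)
      then show False using zC v0_C by simp
    qed
    have "P z ! 1 = u" using P_C[OF zC] gpath_u_C[OF zC] by (cases "gpath G E u z") auto
    then have "?Pb ! 1 = u" using Pz \<open>j \<noteq> 0\<close> by simp
    then have "\<beta> \<in> C" using C_char[OF bG bv] by simp
    then show False using bC by simp
  qed
  let ?Q = "rev ?Px @ tl ?Pb"
  have edisj: "set (ep (rev ?Px)) \<inter> set (ep ?Pb) = {}"
  proof (rule ccontr)
    assume "set (ep (rev ?Px)) \<inter> set (ep ?Pb) \<noteq> {}"
    then obtain \<epsilon> where e: "\<epsilon> \<in> set (ep ?Px)" "\<epsilon> \<in> set (ep ?Pb)" by (auto simp: ep_rev)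
    have "\<epsilon> \<subseteq> set ?Px \<inter> set ?Pb" using set_ep_sub e by blast
    also have "\<dots> \<subseteq> {v0}" using disj sPx by blast
    finally have "card \<epsilon> \<le> 1" using card_mono[of "{v0}" \<epsilon>] by simp
    moreover have "card \<epsilon> = 2" using tree_edge_card[OF tr] e px(1) by (auto simp: is_path_ep)
    ultimately show False by simp
  qed
  have "last (rev ?Px) = hd ?Pb" using px(2,5) pb(2) by (simp add: last_rev)
  then have Qp: "is_path G E ?Q" using is_path_append_tl[OF is_path_rev[OF px(1)] pb(1) _ edisj] by blast
  have lb: "2 \<le> length ?Pb" using hd_neq_last_length[OF pb(5)] pb bv by simp
  have tlb: "tl ?Pb \<noteq> []" using lb by (cases ?Pb) auto
  have "hd ?Q = x" using px by (simp add: hd_rev)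
  moreover have "last ?Q = \<beta>" using tlb pb(3) by (simp add: last_tl)
  ultimately have Q: "gpath G E x \<beta> = ?Q" using gpath_eq[OF tr Qp, of x \<beta>] by blast
  have epQ: "set (ep ?Q) = set (ep ?Px) \<union> set (ep ?Pb)"
    using ep_append_tl[of "rev ?Px" ?Pb] px pb by (simp add: ep_rev last_rev)
  have setQ: "set ?Q = set (tl ?Px) \<union> set ?Pb" using sPx sPb by auto
  have "sp E q ?Q = (\<Prod>y\<in>set (tl ?Px). loc E q y (set (ep ?Px) \<union> set (ep ?Pb))) * (\<Prod>y\<in>set ?Pb. loc E q y (set (ep ?Px) \<union> set (ep ?Pb)))"
    unfolding sp_def epQ setQ using disj by (simp add: prod.union_disjoint)
  also have "(\<Prod>y\<in>set (tl ?Px). loc E q y (set (ep ?Px) \<union> set (ep ?Pb))) = (\<Prod>y\<in>set (tl ?Px). loc E q y (set (ep ?Px)))"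
  proof (rule prod.cong[OF refl], rule loc_cong)
    fix y \<epsilon> assume "y \<in> set (tl ?Px)" "\<epsilon> \<in> E" "y \<in> \<epsilon>"
    then show "(\<epsilon> \<in> set (ep ?Px) \<union> set (ep ?Pb)) = (\<epsilon> \<in> set (ep ?Px))" using disj set_ep_sub by blast
  qed
  also have "(\<Prod>y\<in>set ?Pb. loc E q y (set (ep ?Px) \<union> set (ep ?Pb))) = (\<Prod>y\<in>set ?Pb. loc E q y (set (ep ?Pb)))"
  proof (rule prod.cong[OF refl])
    fix y assume y: "y \<in> set ?Pb"
    show "loc E q y (set (ep ?Px) \<union> set (ep ?Pb)) = loc E q y (set (ep ?Pb))"
    proof (cases "y = v0")
      case True
      then show ?thesis using loc_one[of E y q] q_v0 by simp
    next
      case False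
      show ?thesis
      proof (rule loc_cong)
        fix \<epsilon> assume "\<epsilon> \<in> E" "y \<in> \<epsilon>"
        moreover have "y \<notin> set ?Px" using y disj False sPx by blast
        ultimately show "(\<epsilon> \<in> set (ep ?Px) \<union> set (ep ?Pb)) = (\<epsilon> \<in> set (ep ?Pb))" using set_ep_sub by blast
      qed
    qed
  qed
  finally show ?thesis unfolding Q phid_def phi_prod[OF finE] sp_def by simp
qed

end

context L begin

lemma u1: "a \<in> C \<Longrightarrow> P a ! 1 = u"
  using P_C gpath_u_C by (metis One_nat_def hd_conv_nth nth_Cons_Suc)

lemma B2:
  assumes xC: "x \<in> C" and bC: "\<beta> \<in> C" and xb: "x \<noteq> \<beta>" and bA: "\<beta> \<in> A"
  shows "sp E q (gpath G E x \<beta>) + sp E' qs (gpath (V' \<union> A') E' x \<beta>) = phid V A E q v0 x * sp E q (P \<beta>)"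
proof -
  have xG: "x \<in> G" using xC C_G by blast
  have bG: "\<beta> \<in> G" using bC C_G by blast
  let ?Px = "P x" and ?Pb = "P \<beta>"
  have px: "is_path G E ?Px" "hd ?Px = v0" "last ?Px = x" "distinct ?Px" "?Px \<noteq> []" using P_facts[OF xG] by auto
  have pb: "is_path G E ?Pb" "hd ?Pb = v0" "last ?Pb = \<beta>" "distinct ?Pb" "?Pb \<noteq> []" using P_facts[OF bG] by auto
  have lx: "2 \<le> length ?Px" using hd_neq_last_length[OF px(5)] px xC v0_C by auto
  have lb: "2 \<le> length ?Pb" using hd_neq_last_length[OF pb(5)] pb bC v0_C by auto
  define K where "K = {i. i < length ?Px \<and> i < length ?Pb \<and> ?Px ! i = ?Pb ! i}"
  have finK: "finite K" unfolding K_def by (rule finite_subset[of _ "{..<length ?Px}"]) auto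
  have K1: "1 \<in> K" using lx lb u1[OF xC] u1[OF bC] by (simp add: K_def)
  define k where "k = Max K"
  have kK: "k \<in> K" unfolding k_def using finK K1 by (intro Max_in) auto
  have k1: "1 \<le> k" unfolding k_def using finK K1 by (rule Max_ge)
  have maxk: "\<And>i. i \<in> K \<Longrightarrow> i \<le> k" unfolding k_def using finK by (rule Max_ge)
  have kx: "k < length ?Px" and kb: "k < length ?Pb" and mk: "?Px ! k = ?Pb ! k" using kK by (auto simp: K_def)
  define m where "m = ?Px ! k"
  have mb: "?Pb ! k = m" using mk m_def by simp
  have TK: "take (Suc k) ?Px = take (Suc k) ?Pb" using meet[OF xG bG kx kb mk] by simp
  have DX: "set (drop (Suc k) ?Px) \<inter> set ?Pb = {}"
  proof (rule ccontr)
    assume "set (drop (Suc k) ?Px) \<inter> set ?Pb \<noteq> {}"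
    then obtain z where z: "z \<in> set (drop (Suc k) ?Px)" "z \<in> set ?Pb" by blast
    obtain i where i: "Suc k \<le> i" "i < length ?Px" "?Px ! i = z" using z(1) by (rule in_set_drop_nth)
    obtain j where j: "j < length ?Pb" "?Pb ! j = z" using z(2) by (auto simp: in_set_conv_nth)
    have "i = j" using meet[OF xG bG i(2) j(1)] i j by simp
    then have "i \<in> K" using i j by (simp add: K_def)
    then show False using maxk[of i] i by simp
  qed
  have DB: "set (drop (Suc k) ?Pb) \<inter> set ?Px = {}"
  proof (rule ccontr)
    assume "set (drop (Suc k) ?Pb) \<inter> set ?Px \<noteq> {}"
    then obtain z where z: "z \<in> set (drop (Suc k) ?Pb)" "z \<in> set ?Px" by blast
    obtain i where i: "Suc k \<le> i" "i < length ?Pb" "?Pb ! i = z" using z(1) by (rule in_set_drop_nth)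
    obtain j where j: "j < length ?Px" "?Px ! j = z" using z(2) by (auto simp: in_set_conv_nth)
    have "i = j" using meet[OF bG xG i(2) j(1)] i j by simp
    then have "i \<in> K" using i j by (simp add: K_def)
    then show False using maxk[of i] i by simp
  qed
  have kb2: "Suc k < length ?Pb"
  proof (rule ccontr)
    assume "\<not> Suc k < length ?Pb"
    then have "k = length ?Pb - 1" using kb by simp
    then have mbeta: "m = \<beta>" using mb pb(3) pb(5) by (simp add: last_conv_nth)
    show False
    proof (cases "Suc k < length ?Px")
      case True
      have "2 \<le> valency E (?Px ! k)" using interior_valency[OF px(1) finE, of k] True k1 by simp
      then show False using arrow_val[OF bA] mbeta m_def by simp
    next
      case False
      then have "k = length ?Px - 1" using kx by simp
      then have "m = x" using m_def px(3) px(5) by (simp add: last_conv_nth)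
      then show False using mbeta xb by simp
    qed
  qed
  have sDx: "set (drop k ?Px) = insert m (set (drop (Suc k) ?Px))"
    using kx m_def by (simp add: Cons_nth_drop_Suc[symmetric])
  have sDb: "set (drop k ?Pb) = insert m (set (drop (Suc k) ?Pb))"
    using kb mb by (simp add: Cons_nth_drop_Suc[symmetric])
  have dxC: "set (drop k ?Px) \<subseteq> C" using drop_C[OF xC k1] .
  have dbC: "set (drop k ?Pb) \<subseteq> C" using drop_C[OF bC k1] .
  have mC: "m \<in> C" using sDx dxC by blast
  have mG: "m \<in> G" using mC C_G by blast
  have mV: "m \<in> V"
  proof (rule ccontr)
    assume "m \<notin> V"
    then have mA: "m \<in> A" using mG by blast
    have "2 \<le> valency E (?Pb ! k)" using interior_valency[OF pb(1) finE, of k] kb2 k1 by simp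
    then show False using arrow_val[OF mA] mb by simp
  qed
  have m_take: "m \<in> set (take (Suc k) ?Px)" using kx m_def by (auto simp: in_set_conv_nth intro!: exI[of _ k])
  have mSx: "m \<notin> set (drop (Suc k) ?Px)"
    using set_take_disj_set_drop_if_distinct[OF px(4), of "Suc k" "Suc k"] m_take by auto
  have mSb: "m \<notin> set (drop (Suc k) ?Pb)"
    using set_take_disj_set_drop_if_distinct[OF pb(4), of "Suc k" "Suc k"] m_take TK by auto
  have SxSb: "set (drop (Suc k) ?Px) \<inter> set (drop (Suc k) ?Pb) = {}"
    using DX set_drop_subset[of "Suc k" ?Pb] by blast
  define D1 where "D1 = set (ep (drop k ?Px))"
  define D2 where "D2 = set (ep (drop k ?Pb))"
  have D1E: "D1 \<subseteq> E" using px(1) unfolding D1_def is_path_ep ep_drop by (meson in_set_dropD subset_iff)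
  have D12: "D1 \<inter> D2 = {}"
  proof (rule ccontr)
    assume "D1 \<inter> D2 \<noteq> {}"
    then obtain \<epsilon> where e: "\<epsilon> \<in> D1" "\<epsilon> \<in> D2" by blast
    have "\<epsilon> \<subseteq> set (drop k ?Px) \<inter> set (drop k ?Pb)" using e set_ep_sub unfolding D1_def D2_def by blast
    also have "\<dots> \<subseteq> {m}" using sDx sDb SxSb by blast
    finally have "card \<epsilon> \<le> 1" using card_mono[of "{m}" \<epsilon>] by simp
    moreover have "card \<epsilon> = 2" using tree_edge_card[OF tr] e(1) D1E by blast
    ultimately show False by simp
  qed
  let ?Q = "rev (drop k ?Px) @ tl (drop k ?Pb)"
  have dxp: "is_path G E (drop k ?Px)" using is_path_drop[OF px(1) kx] .
  have dbp: "is_path G E (drop k ?Pb)" using is_path_drop[OF pb(1) kb] .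
  have hdx: "hd (drop k ?Px) = m" using kx m_def by (simp add: hd_drop_conv_nth)
  have hdb: "hd (drop k ?Pb) = m" using kb mb by (simp add: hd_drop_conv_nth)
  have "last (rev (drop k ?Px)) = hd (drop k ?Pb)" using hdx hdb kx by (simp add: last_rev)
  moreover have "set (ep (rev (drop k ?Px))) \<inter> set (ep (drop k ?Pb)) = {}" using D12 unfolding D1_def D2_def by (simp add: ep_rev)
  ultimately have Qp: "is_path G E ?Q" using is_path_append_tl[OF is_path_rev[OF dxp] dbp] by blast
  have tldb: "tl (drop k ?Pb) = drop (Suc k) ?Pb" by (simp add: drop_Suc tl_drop)
  have hdQ: "hd ?Q = x" using kx px(3) by (simp add: hd_rev last_drop)
  have lastQ: "last ?Q = \<beta>" using kb2 pb(3) tldb by (simp add: last_drop)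
  have QT: "gpath G E x \<beta> = ?Q" using gpath_eq[OF tr Qp hdQ lastQ] .
  have setQ: "set ?Q = insert m (set (drop (Suc k) ?Px) \<union> set (drop (Suc k) ?Pb))"
    using sDx tldb by simp
  have setQC: "set ?Q \<subseteq> C" using setQ sDx dxC dbC set_drop_subset_set_drop[of k "Suc k" ?Pb] by auto
  have QT': "gpath (V' \<union> A') E' x \<beta> = ?Q" using gpath_eq[OF tr' path_T'[OF Qp setQC] hdQ lastQ] .
  have epQ: "set (ep ?Q) = D1 \<union> D2"
    using ep_append_tl[of "rev (drop k ?Px)" "drop k ?Pb"] hdx hdb kx kb
    unfolding D1_def D2_def by (simp add: ep_rev last_rev)
  have Davoid: "\<forall>\<epsilon>\<in>D1 \<union> D2. v0 \<notin> \<epsilon> \<and> \<alpha> \<notin> \<epsilon>"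
    using set_ep_sub dxC dbC v0_C alpha_C unfolding D1_def D2_def by blast
  define X where "X = (\<Prod>y\<in>set (drop (Suc k) ?Px). loc E q y (set (ep ?Px)))"
  define Y where "Y = (\<Prod>y\<in>set (drop (Suc k) ?Pb). loc E q y (set (ep ?Pb)))"
  have sideX: "loc E q y (D1 \<union> D2) = loc E q y (set (ep ?Px)) \<and> loc E' qs y (D1 \<union> D2) = loc E q y (D1 \<union> D2)"
    if y: "y \<in> set (drop (Suc k) ?Px)" for y
  proof -
    have "\<forall>\<epsilon>\<in>D2. y \<notin> \<epsilon> \<and> v0 \<notin> \<epsilon> \<and> \<alpha> \<notin> \<epsilon>"
      using Davoid DX y set_ep_sub set_drop_subset[of k ?Pb] unfolding D2_def by blast
    then show ?thesis using side[OF xC k1 y, of D2] unfolding D1_def by simp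
  qed
  have sideY: "loc E q y (D1 \<union> D2) = loc E q y (set (ep ?Pb)) \<and> loc E' qs y (D1 \<union> D2) = loc E q y (D1 \<union> D2)"
    if y: "y \<in> set (drop (Suc k) ?Pb)" for y
  proof -
    have "\<forall>\<epsilon>\<in>D1. y \<notin> \<epsilon> \<and> v0 \<notin> \<epsilon> \<and> \<alpha> \<notin> \<epsilon>"
      using Davoid DB y set_ep_sub set_drop_subset[of k ?Px] unfolding D1_def by blast
    then show ?thesis using side[OF bC k1 y, of D1] unfolding D2_def by (simp add: Un_commute)
  qed
  have prodX: "(\<Prod>y\<in>set (drop (Suc k) ?Px). loc E q y (D1 \<union> D2)) = X"
    "(\<Prod>y\<in>set (drop (Suc k) ?Px). loc E' qs y (D1 \<union> D2)) = X"
    unfolding X_def using sideX by (auto intro!: prod.cong)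
  have prodY: "(\<Prod>y\<in>set (drop (Suc k) ?Pb). loc E q y (D1 \<union> D2)) = Y"
    "(\<Prod>y\<in>set (drop (Suc k) ?Pb). loc E' qs y (D1 \<union> D2)) = Y"
    unfolding Y_def using sideY by (auto intro!: prod.cong)
  have spQ: "sp r' q'' ?Q = loc r' q'' m (D1 \<union> D2) * (\<Prod>y\<in>set (drop (Suc k) ?Px). loc r' q'' y (D1 \<union> D2))
       * (\<Prod>y\<in>set (drop (Suc k) ?Pb). loc r' q'' y (D1 \<union> D2))" for r' q''
    unfolding sp_def epQ setQ using mSx mSb SxSb by (simp add: prod.insert prod.union_disjoint mult.assoc)
  define pm where "pm = pe m"
  have Pm: "P m = take (Suc k) ?Px" using prefix_gpath[OF tr px(1) kx] px(2) m_def by simp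
  have Pmb: "P m = take (Suc k) ?Pb" using Pm TK by simp
  have pmf: "pm \<in> set (ep (P m))" "pm \<in> E" "m \<in> pm" using pe_in[OF mC] pm_def by auto
  have notD: "pm \<notin> set (ep (drop k p))" if "distinct p" "is_path G E p" "P m = take (Suc k) p" for p
  proof
    assume "pm \<in> set (ep (drop k p))"
    moreover have "pm \<in> set (take k (ep p))" using pmf(1) that(3) by (simp add: ep_take)
    moreover have "distinct (ep p)" using that(2) by (simp add: is_path_ep)
    ultimately show False using set_take_disj_set_drop_if_distinct[of "ep p" k k] by (auto simp: ep_drop)
  qed
  have pmD: "pm \<notin> D1 \<union> D2" using notD[OF px(4) px(1) Pm] notD[OF pb(4) pb(1) Pmb] unfolding D1_def D2_def by blast
  have pe'D: "pe' m \<notin> D1 \<union> D2"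
  proof (cases "m = u")
    case True
    then show ?thesis using Davoid by (auto simp: pe'_def)
  next
    case False
    then show ?thesis using pmD pm_def by (simp add: pe'_def)
  qed
  define L where "L = loc E q m (insert pm (D1 \<union> D2))"
  have locm: "loc E q m (D1 \<union> D2) = q pm m * L"
    unfolding L_def by (rule loc_insert[OF finE pmf(2,3) pmD])
  have pe'f: "pe' m \<in> E'" "m \<in> pe' m" using pe'_in[OF mC] by auto
  have "loc E' qs m (D1 \<union> D2) = qs (pe' m) m * loc E' qs m (insert (pe' m) (D1 \<union> D2))"
    by (rule loc_insert[OF finE' pe'f pe'D])
  then have locm': "loc E' qs m (D1 \<union> D2) = qs (pe' m) m * L"
    using qs_loc[OF mC Davoid] unfolding L_def pm_def by simp
  have S: "q pm m + qs (pe' m) m = (Phi m)^2 * loc E q m {pm}" using S_lemma[OF mC mV] pm_def by simp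
  have tk: "take k ?Px \<noteq> []" "take k ?Pb \<noteq> []" using k1 px(5) pb(5) by auto
  have tkeq: "take k ?Pb = take k ?Px" using TK by (metis min.absorb1 le_SucI order_refl take_take)
  have bPm: "butlast (P m) = take k ?Px" using Pm kx by (simp add: butlast_take)
  have phi_part: "(\<Prod>y\<in>set (tl (take k p)). loc E q y (set (ep p))) = Phi m"
    if "distinct p" "k < length p" "P m = take (Suc k) p" "take k p = take k ?Px" for p
  proof -
    have "(\<Prod>y\<in>set (tl (take k p)). loc E q y (set (ep p))) = (\<Prod>y\<in>set (tl (take k p)). loc E q y (set (ep (P m))))"
    proof (rule prod.cong[OF refl], rule loc_cong)
      fix y \<epsilon> assume y: "y \<in> set (tl (take k p))" and e: "\<epsilon> \<in> E" "y \<in> \<epsilon>"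
      have yt: "y \<in> set (take k p)" using y by (cases "take k p") auto
      have "y \<notin> set (drop k p)" using set_take_disj_set_drop_if_distinct[OF that(1), of k k] yt by auto
      then have "\<epsilon> \<notin> set (ep (drop k p))" using set_ep_sub e(2) by blast
      then show "(\<epsilon> \<in> set (ep p)) = (\<epsilon> \<in> set (ep (P m)))" using ep_split[OF that(2)] that(3) by auto
    qed
    also have "\<dots> = Phi m" unfolding Phi_def bPm that(4) by simp
    finally show ?thesis .
  qed
  have mloc_part: "loc E q m (set (ep p)) = loc E q m (insert pm (set (ep (drop k p))))"
    if "k < length p" "P m = take (Suc k) p" for p
  proof (rule loc_cong)
    fix \<epsilon> assume e: "\<epsilon> \<in> E" "m \<in> \<epsilon>"
    have dPm: "distinct (P m)" "last (P m) = m" using P_facts[OF mG] by auto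
    have "\<epsilon> \<in> set (ep (P m)) \<longleftrightarrow> \<epsilon> = pm"
      using last_edge[OF dPm(1), of \<epsilon>] dPm(2) e(2) pmf(1) by (auto simp: pm_def pe_def)
    then show "(\<epsilon> \<in> set (ep p)) = (\<epsilon> \<in> insert pm (set (ep (drop k p))))"
      using ep_split[OF that(1)] that(2) by auto
  qed
  have phid_eq: "phid V A E q v0 x = (\<Prod>y\<in>set (tl ?Px). loc E q y (set (ep ?Px)))"
    unfolding phid_def phi_prod[OF finE] by simp
  have splitx: "tl ?Px = tl (take k ?Px) @ m # drop (Suc k) ?Px"
    using id_take_nth_drop[OF kx] tk(1) m_def by (metis tl_append2)
  have splitb: "?Pb = take k ?Pb @ m # drop (Suc k) ?Pb"
    using id_take_nth_drop[OF kb] mb by simp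
  have dtlx: "distinct (tl ?Px)" using px(4) by (simp add: distinct_tl)
  have R1: "phid V A E q v0 x = Phi m * loc E q m (insert pm D1) * X"
    unfolding phid_eq splitx prod_split3[OF dtlx[unfolded splitx]] X_def
    using phi_part[OF px(4) kx Pm refl] mloc_part[OF kx Pm] unfolding D1_def by simp
  have "hd (take k ?Pb) = v0" using k1 pb(2) by (simp add: hd_take)
  then have tkb: "take k ?Pb = v0 # tl (take k ?Pb)" using list.collapse[OF tk(2)] by simp
  have v0tl: "v0 \<notin> set (tl (take k ?Pb))" using pb(4) tkb by (metis distinct.simps(2) distinct_take)
  have "(\<Prod>y\<in>set (take k ?Pb). loc E q y (set (ep ?Pb))) = (\<Prod>y\<in>set (tl (take k ?Pb)). loc E q y (set (ep ?Pb)))"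
    using v0tl loc_one[of E v0 q] q_v0 by (subst tkb) (simp add: prod.insert)
  also have "\<dots> = Phi m" using phi_part[OF pb(4) kb Pmb tkeq] .
  finally have phib: "(\<Prod>y\<in>set (take k ?Pb). loc E q y (set (ep ?Pb))) = Phi m" .
  have eqs: "set (take k ?Pb @ m # drop (Suc k) ?Pb) = set ?Pb" using arg_cong[OF splitb[symmetric], of set] .
  have dPb: "distinct (take k ?Pb @ m # drop (Suc k) ?Pb)" using pb(4) by (simp only: splitb[symmetric])
  have "sp E q ?Pb = (\<Prod>y\<in>set (take k ?Pb @ m # drop (Suc k) ?Pb). loc E q y (set (ep ?Pb)))"
    unfolding sp_def eqs ..
  also have "\<dots> = (\<Prod>y\<in>set (take k ?Pb). loc E q y (set (ep ?Pb))) * loc E q m (set (ep ?Pb)) * (\<Prod>y\<in>set (drop (Suc k) ?Pb). loc E q y (set (ep ?Pb)))"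
    by (rule prod_split3[OF dPb])
  also have "\<dots> = Phi m * loc E q m (insert pm D2) * Y"
    using phib mloc_part[OF kb Pmb] unfolding D2_def Y_def by simp
  finally have R2: "sp E q ?Pb = Phi m * loc E q m (insert pm D2) * Y" .
  have U: "loc E q m (insert pm D1) * loc E q m (insert pm D2) = L * loc E q m {pm}"
  proof -
    have "insert pm D1 \<union> insert pm D2 = insert pm (D1 \<union> D2)" by auto
    moreover have "insert pm D1 \<inter> insert pm D2 = {pm}" using D12 by auto
    ultimately show ?thesis using loc_un[OF finE, of q m "insert pm D1" "insert pm D2"] D12 unfolding L_def by simp
  qed
  have "sp E q (gpath G E x \<beta>) + sp E' qs (gpath (V' \<union> A') E' x \<beta>)
      = (q pm m + qs (pe' m) m) * L * X * Y"
    unfolding QT QT' spQ prodX prodY locm locm' by (simp add: algebra_simps)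
  also have "\<dots> = (Phi m)^2 * (L * loc E q m {pm}) * X * Y" using S by (simp add: algebra_simps)
  also have "\<dots> = phid V A E q v0 x * sp E q ?Pb" unfolding R1 R2 U[symmetric] by (simp add: algebra_simps power2_eq_square)
  finally show ?thesis .
qed

end

context L begin

lemma xva_T:
  assumes "x \<in> G" "\<beta> \<in> G"
  shows "xva V A E f q x \<beta> = f \<beta> * sp E q (gpath G E x \<beta>)"
proof -
  have "is_path G E (gpath G E x \<beta>)" using gP[OF assms] by blast
  then show ?thesis unfolding xva_def Let_def sp_def using incident_prod[OF tr] by simp
qed

lemma xva_T':
  assumes "x \<in> C" "\<beta> \<in> C"
  shows "xva V' A' E' f' qs x \<beta> = f' \<beta> * sp E' qs (gpath (V' \<union> A') E' x \<beta>)"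
proof -
  have "is_path (V' \<union> A') E' (gpath (V' \<union> A') E' x \<beta>)" using gpath_path[OF tr'] assms Gatt by auto
  then show ?thesis unfolding xva_def Let_def sp_def using incident_prod[OF tr'] by simp
qed

lemma main:
  assumes xC: "x \<in> C" and xV: "x \<in> V \<or> x \<in> A0 A f"
  shows "Nd V A E f q x + Nd V' A' E' f' qs x = phid V A E q v0 x * degT V A E f q v0"
proof -
  have xG: "x \<in> G" using xC C_G by blast
  have finA: "finite A" using T by (simp add: decorated_tree_def)
  define S1 where "S1 = (A - A0 A f) \<inter> C"
  define S2 where "S2 = (A - A0 A f) - C"
  have AS: "A - A0 A f = S1 \<union> S2" "S1 \<inter> S2 = {}" unfolding S1_def S2_def by auto
  have fin: "finite S1" "finite S2" using finA unfolding S1_def S2_def by auto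
  have aA: "\<alpha> \<notin> A" using fresh by blast
  have A'S: "A' - A0 A' f' = S1"
    unfolding S1_def att_A_def A0_def att_f_def using aA by auto
  have f'S: "f' \<beta> = f \<beta>" if "\<beta> \<in> S1" for \<beta> using that aA unfolding S1_def att_f_def by auto
  define ph where "ph = phid V A E q v0 x"
  have xb: "x \<noteq> \<beta>" if "\<beta> \<in> A - A0 A f" for \<beta> using that xV VA by (auto simp: A0_def)
  have v0G: "v0 \<in> G" using v0V by blast
  have e1: "xva V A E f q x \<beta> + xva V' A' E' f' qs x \<beta> = ph * xva V A E f q v0 \<beta>" if b: "\<beta> \<in> S1" for \<beta>
  proof -
    have bC: "\<beta> \<in> C" and bA: "\<beta> \<in> A" using b S1_def by auto
    have bG: "\<beta> \<in> G" using bA by blast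
    have "xva V A E f q x \<beta> + xva V' A' E' f' qs x \<beta> = f \<beta> * (sp E q (gpath G E x \<beta>) + sp E' qs (gpath (V' \<union> A') E' x \<beta>))"
      using xva_T[OF xG bG] xva_T'[OF xC bC] f'S[OF b] by (simp add: algebra_simps)
    also have "\<dots> = f \<beta> * (ph * sp E q (P \<beta>))" using B2[OF xC bC xb bA] b AS ph_def by auto
    also have "\<dots> = ph * xva V A E f q v0 \<beta>" using xva_T[OF v0G bG] by simp
    finally show ?thesis .
  qed
  have e2: "xva V A E f q x \<beta> = ph * xva V A E f q v0 \<beta>" if b: "\<beta> \<in> S2" for \<beta>
  proof -
    have bC: "\<beta> \<notin> C" and bA: "\<beta> \<in> A" using b S2_def by auto
    have bG: "\<beta> \<in> G" using bA by blast
    have bv: "\<beta> \<noteq> v0" using bA v0V VA by blast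
    show ?thesis using xva_T[OF xG bG] xva_T[OF v0G bG] B1[OF xC bG bC bv] ph_def by simp
  qed
  have "Nd V A E f q x + Nd V' A' E' f' qs x
      = (\<Sum>\<beta>\<in>S1. xva V A E f q x \<beta>) + (\<Sum>\<beta>\<in>S2. xva V A E f q x \<beta>) + (\<Sum>\<beta>\<in>S1. xva V' A' E' f' qs x \<beta>)"
    unfolding Nd_def AS(1) A'S using fin AS(2) by (simp add: sum.union_disjoint)
  also have "\<dots> = (\<Sum>\<beta>\<in>S1. xva V A E f q x \<beta> + xva V' A' E' f' qs x \<beta>) + (\<Sum>\<beta>\<in>S2. xva V A E f q x \<beta>)"
    by (simp add: sum.distrib)
  also have "\<dots> = (\<Sum>\<beta>\<in>S1. ph * xva V A E f q v0 \<beta>) + (\<Sum>\<beta>\<in>S2. ph * xva V A E f q v0 \<beta>)"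
    using e1 e2 by simp
  also have "\<dots> = ph * degT V A E f q v0"
    unfolding degT_def Nd_def AS(1) using fin AS(2) by (simp add: sum.union_disjoint sum_distrib_left[symmetric] distrib_left)
  finally show ?thesis unfolding ph_def .
qed

end

theorem lemma6p7:
  fixes V A :: "'a set" and E :: "'a set set" and f :: "'a \<Rightarrow> int"
    and q qs :: "'a set \<Rightarrow> 'a \<Rightarrow> int" and v0 u \<alpha> x :: 'a
  assumes T: "decorated_tree V A E f q"
    and root: "is_root V A E q v0"
    and deg_pos: "valency E v0 > 0"
    and nbr: "{v0, u} \<in> E"
    and fresh: "\<alpha> \<notin> V \<union> A"
    and Ti: "att_q V A E f q v0 u \<alpha> qs"
    and x: "x \<in> (V - {v0}) \<union> A0 A f"
    and xi: "x \<in> att_V V E v0 u \<union> (A0 (att_A A E v0 u \<alpha>) (att_f f \<alpha>) - {\<alpha>})"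
  shows "Nd V A E f q x
           + Nd (att_V V E v0 u) (att_A A E v0 u \<alpha>) (att_E E v0 u \<alpha>) (att_f f \<alpha>) qs x
         = phid V A E q v0 x * degT V A E f q v0"
proof -
  interpret L V A E f q qs v0 u \<alpha> using T root nbr fresh Ti by unfold_locales
  have xC: "x \<in> comp_cells E v0 u" using xi by (auto simp: att_V_def att_A_def A0_def)
  have "x \<in> V \<or> x \<in> A0 A f" using x by blast
  then show ?thesis using main[OF xC] by simp
qed

end
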